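(* For any natural number $n \geq 1$, $\{\omega^n, (\omega^n)^\star\} \leq_c \{\omega^{2n-1}, (\omega^{2n-1})^\star\}$.
   Context: Structures have domains contained in $\omega$. For countable structures $\mathcal{A},\mathcal{B}$, the class $\{\mathcal{A},\mathcal{B}\}$ denotes the class of all structures (with domain $\subseteq\omega$) isomorphic to $\mathcal{A}$ or to $\mathcal{B}$. Linear orders are in the language $\{<\}$; $L^\star$ is the reverse of a linear order $L$; $\omega^m$ denotes ordinal exponentiation (as an order type). An enumeration operator $\Gamma$ is a c.e. set of pairs $(\alpha,\varphi)$ with $\alpha$ a finite set of basic (atomic or negated atomic) sentences of the input language with constants from $\omega$ and $\varphi$ a basic sentence of the output language with constants from $\omega$; $\Gamma(X)=\{\varphi : (\alpha,\varphi)\in\Gamma,\ \alpha\subseteq X\}$. $\Gamma$ is a computable embedding of $\mathcal{K}_0$ into $\mathcal{K}_1$ ($\mathcal{K}_0\leq_c\mathcal{K}_1$) if for every $\mathcal{A}\in\mathcal{K}_0$, $\Gamma$ applied to the atomic diagram of $\mathcal{A}$ is the atomic diagram of a structure $\Gamma(\mathcal{A})\in\mathcal{K}_1$, and for all $\mathcal{A},\mathcal{B}\in\mathcal{K}_0$, $\mathcal{A}\cong\mathcal{B}$ iff $\Gamma(\mathcal{A})\cong\Gamma(\mathcal{B})$. *)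

theory Defs
  imports Main "HOL-Library.Nat_Bijection"
begin

datatype recf = Zero | Succ | Proj nat | Comp recf "recf list" | Prim recf recf | Mn recf

inductive reval :: "recf \<Rightarrow> nat list \<Rightarrow> nat \<Rightarrow> bool" where
  reval_zero: "reval Zero xs 0"
| reval_succ: "reval Succ (x # xs) (Suc x)"
| reval_proj: "i < length xs \<Longrightarrow> reval (Proj i) xs (xs ! i)"
| reval_comp: "list_all2 (\<lambda>g y. reval g xs y) gs ys \<Longrightarrow> reval f ys z \<Longrightarrow> reval (Comp f gs) xs z"
| reval_prim0: "reval f xs y \<Longrightarrow> reval (Prim f g) (0 # xs) y"
| reval_primS: "reval (Prim f g) (n # xs) r \<Longrightarrow> reval g (n # r # xs) y
     \<Longrightarrow> reval (Prim f g) (Suc n # xs) y"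
| reval_mn: "reval f (y # xs) 0 \<Longrightarrow> (\<forall>z<y. \<exists>w. w \<noteq> 0 \<and> reval f (z # xs) w)
     \<Longrightarrow> reval (Mn f) xs y"

definition ce :: "nat set \<Rightarrow> bool" where
  "ce X \<longleftrightarrow> (\<exists>f. \<forall>x. x \<in> X \<longleftrightarrow> (\<exists>y. reval f [x] y))"

datatype atom = Lt nat nat | Eq nat nat
datatype lit = Pos atom | Neg atom

fun atom_code :: "atom \<Rightarrow> nat" where
  "atom_code (Lt a b) = prod_encode (0, prod_encode (a, b))"
| "atom_code (Eq a b) = prod_encode (1, prod_encode (a, b))"

fun lit_code :: "lit \<Rightarrow> nat" where
  "lit_code (Pos a) = prod_encode (0, atom_code a)"
| "lit_code (Neg a) = prod_encode (1, atom_code a)"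

type_synonym 'a struc = "'a set \<times> ('a \<times> 'a) set"

definition wf_struc :: "'a struc \<Rightarrow> bool" where
  "wf_struc S \<longleftrightarrow> snd S \<subseteq> fst S \<times> fst S"

definition iso :: "'a struc \<Rightarrow> 'b struc \<Rightarrow> bool" where
  "iso S T \<longleftrightarrow> (\<exists>f. bij_betw f (fst S) (fst T) \<and>
     (\<forall>a\<in>fst S. \<forall>b\<in>fst S. (a, b) \<in> snd S \<longleftrightarrow> (f a, f b) \<in> snd T))"

definition diag :: "nat struc \<Rightarrow> lit set" where
  "diag S = {Pos (Lt a b) | a b. a \<in> fst S \<and> b \<in> fst S \<and> (a, b) \<in> snd S}
          \<union> {Neg (Lt a b) | a b. a \<in> fst S \<and> b \<in> fst S \<and> (a, b) \<notin> snd S}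
          \<union> {Pos (Eq a a) | a. a \<in> fst S}
          \<union> {Neg (Eq a b) | a b. a \<in> fst S \<and> b \<in> fst S \<and> a \<noteq> b}"

text \<open>The order type omega^m: length-m sequences of naturals, lexicographic order
  (first coordinate most significant).\<close>
definition omega_pow :: "nat \<Rightarrow> nat list struc" where
  "omega_pow m = ({xs. length xs = m},
     {(xs, ys). length xs = m \<and> length ys = m \<and> (xs, ys) \<in> lex less_than})"

definition rev_order :: "'a struc \<Rightarrow> 'a struc" where
  "rev_order S = (fst S, (snd S)\<inverse>)"

definition two_class :: "'a struc \<Rightarrow> 'b struc \<Rightarrow> nat struc set" where
  "two_class A B = {S. wf_struc S \<and> (iso S A \<or> iso S B)}"

definition enum_op :: "(lit set \<times> lit) set \<Rightarrow> bool" where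
  "enum_op \<Gamma> \<longleftrightarrow> (\<forall>(\<alpha>, \<phi>) \<in> \<Gamma>. finite \<alpha>) \<and>
     ce ((\<lambda>(\<alpha>, \<phi>). prod_encode (set_encode (lit_code ` \<alpha>), lit_code \<phi>)) ` \<Gamma>)"

definition apply_op :: "(lit set \<times> lit) set \<Rightarrow> lit set \<Rightarrow> lit set" where
  "apply_op \<Gamma> X = {\<phi>. \<exists>\<alpha>. (\<alpha>, \<phi>) \<in> \<Gamma> \<and> \<alpha> \<subseteq> X}"

definition comp_embeds :: "nat struc set \<Rightarrow> nat struc set \<Rightarrow> bool" where
  "comp_embeds K0 K1 \<longleftrightarrow> (\<exists>\<Gamma>. enum_op \<Gamma> \<and>
     (\<forall>A\<in>K0. \<exists>B\<in>K1. apply_op \<Gamma> (diag A) = diag B) \<and>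
     (\<forall>A\<in>K0. \<forall>A'\<in>K0. \<forall>B\<in>K1. \<forall>B'\<in>K1.
        apply_op \<Gamma> (diag A) = diag B \<longrightarrow> apply_op \<Gamma> (diag A') = diag B' \<longrightarrow>
        (iso A A' \<longleftrightarrow> iso B B')))"

end

theory Submission
  imports Defs
begin

definition comps :: "recf \<Rightarrow> nat \<Rightarrow> (nat list \<Rightarrow> nat) \<Rightarrow> bool" where
  "comps r k F \<longleftrightarrow> (\<forall>xs y. length xs = k \<longrightarrow> (reval r xs y \<longleftrightarrow> y = F xs))"

inductive_cases reval_ZeroE: "reval Zero xs y"
inductive_cases reval_SuccE: "reval Succ xs y"
inductive_cases reval_ProjE: "reval (Proj i) xs y"
inductive_cases reval_CompE: "reval (Comp f gs) xs y"
inductive_cases reval_PrimE: "reval (Prim f g) xs y"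
inductive_cases reval_MnE: "reval (Mn f) xs y"

lemma comps_cong: "comps r k F \<Longrightarrow> (\<And>xs. length xs = k \<Longrightarrow> F xs = G xs) \<Longrightarrow> comps r k G"
  unfolding comps_def by auto

lemma comps_proj: "i < k \<Longrightarrow> comps (Proj i) k (\<lambda>xs. xs ! i)"
  unfolding comps_def by (auto elim: reval_ProjE intro: reval_proj)

lemma comps_zero: "comps (Comp Zero []) k (\<lambda>_. 0)"
  unfolding comps_def
  by (auto elim!: reval_CompE reval_ZeroE intro!: reval_comp[of _ _ "[]"] reval_zero)

lemma la2_comps:
  assumes "list_all2 (\<lambda>g G. comps g k G) gs Gs" "length xs = k"
  shows "list_all2 (\<lambda>g y. reval g xs y) gs ys \<longleftrightarrow> ys = map (\<lambda>G. G xs) Gs"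
  using assms(1)
proof (induction gs Gs arbitrary: ys rule: list_all2_induct)
  case Nil then show ?case by auto
next
  case (Cons g gs G Gs)
  show ?case
  proof (cases ys)
    case Nil then show ?thesis by simp
  next
    case (Cons y ys')
    then show ?thesis using Cons.IH[of ys'] Cons.hyps(1) assms(2) unfolding comps_def by auto
  qed
qed

lemma comps_comp:
  assumes "comps f (length gs) F" "list_all2 (\<lambda>g G. comps g k G) gs Gs"
  shows "comps (Comp f gs) k (\<lambda>xs. F (map (\<lambda>G. G xs) Gs))"
  unfolding comps_def
proof (intro allI impI)
  fix xs :: "nat list" and y assume len: "length xs = k"
  have l: "length (map (\<lambda>G. G xs) Gs) = length gs" using list_all2_lengthD[OF assms(2)] by simp
  show "reval (Comp f gs) xs y = (y = F (map (\<lambda>G. G xs) Gs))"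
  proof
    assume "reval (Comp f gs) xs y"
    then obtain ys where "list_all2 (\<lambda>g y. reval g xs y) gs ys" "reval f ys y"
      by (auto elim: reval_CompE)
    then show "y = F (map (\<lambda>G. G xs) Gs)" using la2_comps[OF assms(2) len] assms(1) l
      unfolding comps_def by auto
  next
    assume "y = F (map (\<lambda>G. G xs) Gs)"
    then show "reval (Comp f gs) xs y" using la2_comps[OF assms(2) len] assms(1) l
      unfolding comps_def by (auto intro: reval_comp)
  qed
qed

lemma comps_comp1:
  assumes "comps f 1 F" "comps g k G"
  shows "comps (Comp f [g]) k (\<lambda>xs. F [G xs])"
  using comps_comp[of f "[g]" F k "[G]"] assms by simp

lemma comps_comp2:
  assumes "comps f 2 F" "comps g k G" "comps h k H"
  shows "comps (Comp f [g, h]) k (\<lambda>xs. F [G xs, H xs])"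
proof -
  have "comps f (length [g, h]) F" using assms(1) by (simp add: numeral_2_eq_2)
  then show ?thesis using comps_comp[of f "[g, h]" F k "[G, H]"] assms by simp
qed

lemma comps_succ: "comps Succ 1 (\<lambda>xs. Suc (hd xs))"
  unfolding comps_def
  by (auto elim!: reval_SuccE simp: length_Suc_conv intro: reval_succ)

lemma comps_prim:
  assumes f: "comps f k F" and g: "comps g (Suc (Suc k)) G"
  shows "comps (Prim f g) (Suc k) (\<lambda>xs. rec_nat (F (tl xs)) (\<lambda>n r. G (n # r # tl xs)) (hd xs))"
  unfolding comps_def
proof (intro allI impI)
  fix xs :: "nat list" and y assume "length xs = Suc k"
  then obtain n ys where xs: "xs = n # ys" and ly: "length ys = k" by (cases xs) auto
  have "reval (Prim f g) (n # ys) y \<longleftrightarrow> y = rec_nat (F ys) (\<lambda>n r. G (n # r # ys)) n" for y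
  proof (induction n arbitrary: y)
    case 0
    show ?case
    proof
      assume "reval (Prim f g) (0 # ys) y"
      then have "reval f ys y" by (auto elim: reval_PrimE)
      then show "y = rec_nat (F ys) (\<lambda>n r. G (n # r # ys)) 0" using f ly unfolding comps_def by auto
    next
      assume "y = rec_nat (F ys) (\<lambda>n r. G (n # r # ys)) 0"
      then show "reval (Prim f g) (0 # ys) y" using f ly unfolding comps_def by (auto intro: reval_prim0)
    qed
  next
    case (Suc n)
    show ?case
    proof
      assume "reval (Prim f g) (Suc n # ys) y"
      then obtain r where "reval (Prim f g) (n # ys) r" "reval g (n # r # ys) y"
        by (auto elim: reval_PrimE)
      then show "y = rec_nat (F ys) (\<lambda>n r. G (n # r # ys)) (Suc n)"
        using Suc.IH g ly unfolding comps_def by auto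
    next
      assume "y = rec_nat (F ys) (\<lambda>n r. G (n # r # ys)) (Suc n)"
      then show "reval (Prim f g) (Suc n # ys) y"
        using Suc.IH[of "rec_nat (F ys) (\<lambda>n r. G (n # r # ys)) n"] g ly unfolding comps_def
        by (auto intro: reval_primS)
    qed
  qed
  then show "reval (Prim f g) xs y = (y = rec_nat (F (tl xs)) (\<lambda>n r. G (n # r # tl xs)) (hd xs))"
    using xs by simp
qed

lemma comps_prim':
  assumes "comps f k F" "comps g k2 G" "k2 = Suc (Suc k)" "k1 = Suc k"
  shows "comps (Prim f g) k1 (\<lambda>xs. rec_nat (F (tl xs)) (\<lambda>n r. G (n # r # tl xs)) (hd xs))"
  using comps_prim assms by simp

lemma comps_mn:
  assumes "comps f (Suc k) F" "length xs = k"
  shows "reval (Mn f) xs y \<longleftrightarrow> F (y # xs) = 0 \<and> (\<forall>z<y. F (z # xs) \<noteq> 0)"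
  using assms unfolding comps_def
  by (auto elim!: reval_MnE intro!: reval_mn)

definition addR :: recf where "addR = Prim (Proj 0) (Comp Succ [Proj 1])"
definition mulR :: recf where "mulR = Prim (Comp Zero []) (Comp addR [Proj 1, Proj 2])"
definition predR :: recf where "predR = Prim (Comp Zero []) (Proj 0)"
definition subR :: recf where "subR = Prim (Proj 0) (Comp predR [Proj 1])"

lemma len2: "length xs = 2 \<Longrightarrow> xs = [xs!0, xs!1]"
  by (cases xs; cases "tl xs") auto
lemma len1: "length xs = 1 \<Longrightarrow> xs = [xs!0]"
  by (cases xs) auto

lemma comps_addR: "comps addR 2 (\<lambda>xs. xs!0 + xs!1)"
proof -
  have "comps (Comp Succ [Proj 1]) 3 (\<lambda>xs. Suc (xs!1))"
    using comps_comp1[OF comps_succ comps_proj[of 1 3, simplified]] by simp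
  from comps_prim'[OF comps_proj[of 0 1, simplified] this]
  have "comps addR 2 (\<lambda>xs. rec_nat (tl xs ! 0) (\<lambda>n r. Suc r) (hd xs))"
    unfolding addR_def by (simp add: numeral_2_eq_2)
  then show ?thesis
  proof (rule comps_cong)
    fix xs :: "nat list" assume "length xs = 2"
    then obtain a b where "xs = [a, b]" using len2 by metis
    then show "rec_nat (tl xs ! 0) (\<lambda>n r. Suc r) (hd xs) = xs ! 0 + xs ! 1"
      by (induction a arbitrary: xs) auto
  qed
qed

lemma comps_mulR: "comps mulR 2 (\<lambda>xs. xs!0 * xs!1)"
proof -
  have "comps (Comp addR [Proj 1, Proj 2]) 3 (\<lambda>xs. xs!1 + xs!2)"
    using comps_comp2[OF comps_addR comps_proj[of 1 3, simplified] comps_proj[of 2 3, simplified]] by simp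
  from comps_prim'[OF comps_zero this]
  have "comps mulR 2 (\<lambda>xs. rec_nat 0 (\<lambda>n r. r + tl xs ! 0) (hd xs))"
    unfolding mulR_def by (simp add: numeral_2_eq_2)
  then show ?thesis
  proof (rule comps_cong)
    fix xs :: "nat list" assume "length xs = 2"
    then obtain a b where "xs = [a, b]" using len2 by metis
    then show "rec_nat 0 (\<lambda>n r. r + tl xs ! 0) (hd xs) = xs ! 0 * xs ! 1"
      by (induction a arbitrary: xs) auto
  qed
qed

lemma comps_predR: "comps predR 1 (\<lambda>xs. xs!0 - 1)"
proof -
  from comps_prim'[OF comps_zero comps_proj[of 0 2, simplified]]
  have "comps predR 1 (\<lambda>xs. rec_nat 0 (\<lambda>n r. n) (hd xs))"
    unfolding predR_def by simp
  then show ?thesis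
  proof (rule comps_cong)
    fix xs :: "nat list" assume "length xs = 1"
    then obtain a where "xs = [a]" using len1 by metis
    then show "rec_nat 0 (\<lambda>n r. n) (hd xs) = xs ! 0 - 1" by (cases a) auto
  qed
qed

lemma comps_subR: "comps subR 2 (\<lambda>xs. xs!1 - xs!0)"
proof -
  have "comps (Comp predR [Proj 1]) 3 (\<lambda>xs. xs!1 - 1)"
    using comps_comp1[OF comps_predR comps_proj[of 1 3, simplified]] by simp
  from comps_prim'[OF comps_proj[of 0 1, simplified] this]
  have "comps subR 2 (\<lambda>xs. rec_nat (tl xs ! 0) (\<lambda>n r. r - 1) (hd xs))"
    unfolding subR_def by (simp add: numeral_2_eq_2)
  then show ?thesis
  proof (rule comps_cong)
    fix xs :: "nat list" assume "length xs = 2"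
    then obtain a b where "xs = [a, b]" using len2 by metis
    then show "rec_nat (tl xs ! 0) (\<lambda>n r. r - 1) (hd xs) = xs ! 1 - xs ! 0"
      by (induction a arbitrary: xs) auto
  qed
qed


datatype ex = V nat | K nat | Ad ex ex | Mu ex ex | Mi ex ex | Sm ex ex | Pd ex ex

fun ev :: "ex \<Rightarrow> nat list \<Rightarrow> nat" where
  "ev (V i) xs = (if i < length xs then xs ! i else 0)"
| "ev (K c) xs = c"
| "ev (Ad a b) xs = ev a xs + ev b xs"
| "ev (Mu a b) xs = ev a xs * ev b xs"
| "ev (Mi a b) xs = ev a xs - ev b xs"
| "ev (Sm b e) xs = (\<Sum>j<ev b xs. ev e (j # xs))"
| "ev (Pd b e) xs = (\<Prod>j<ev b xs. ev e (j # xs))"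

fun cl :: "nat \<Rightarrow> ex \<Rightarrow> bool" where
  "cl k (V i) = (i < k)"
| "cl k (K c) = True"
| "cl k (Ad a b) = (cl k a \<and> cl k b)"
| "cl k (Mu a b) = (cl k a \<and> cl k b)"
| "cl k (Mi a b) = (cl k a \<and> cl k b)"
| "cl k (Sm b e) = (cl k b \<and> cl (Suc k) e)"
| "cl k (Pd b e) = (cl k b \<and> cl (Suc k) e)"

fun kR :: "nat \<Rightarrow> recf" where
  "kR 0 = Comp Zero []"
| "kR (Suc c) = Comp Succ [kR c]"

definition envR :: "nat \<Rightarrow> recf list" where
  "envR k = Proj 0 # map (\<lambda>i. Proj (i + 2)) [0..<k]"

fun cp :: "ex \<Rightarrow> nat \<Rightarrow> recf" where
  "cp (V i) k = Proj i"
| "cp (K c) k = kR c"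
| "cp (Ad a b) k = Comp addR [cp a k, cp b k]"
| "cp (Mu a b) k = Comp mulR [cp a k, cp b k]"
| "cp (Mi a b) k = Comp subR [cp b k, cp a k]"
| "cp (Sm b e) k = Comp (Prim (Comp Zero []) (Comp addR [Proj 1, Comp (cp e (Suc k)) (envR k)]))
     (cp b k # map Proj [0..<k])"
| "cp (Pd b e) k = Comp (Prim (kR 1) (Comp mulR [Proj 1, Comp (cp e (Suc k)) (envR k)]))
     (cp b k # map Proj [0..<k])"

lemma comps_kR: "comps (kR c) k (\<lambda>_. c)"
proof (induction c)
  case 0 then show ?case using comps_zero by simp
next
  case (Suc c)
  from comps_comp1[OF comps_succ Suc] show ?case by simp
qed

lemma la2_projs: "list_all2 (\<lambda>g G. comps g k G) (map Proj [0..<k]) (map (\<lambda>i xs. xs ! i) [0..<k])"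
  by (auto simp: list_all2_conv_all_nth intro: comps_proj)

lemma map_projs: "length xs = k \<Longrightarrow> map (\<lambda>G. G xs) (map (\<lambda>i xs. xs ! i) [0..<k]) = xs"
  by (auto simp: comp_def intro: nth_equalityI)

lemma map_projs': "length xs = k \<Longrightarrow> map ((\<lambda>G. G xs) \<circ> (\<lambda>i xs. xs ! i)) [0..<k] = xs"
  by (auto intro: nth_equalityI)

lemma rec_sum: "rec_nat 0 (\<lambda>n r. r + f n) m = (\<Sum>j<m. f j)" by (induction m) auto
lemma rec_prod: "rec_nat 1 (\<lambda>n r. r * f n) m = (\<Prod>j<m. f j)" by (induction m) (auto simp: mult.commute)
 
lemma comps_env:
  assumes "comps f (Suc k) F"
  shows "comps (Comp f (envR k)) (Suc (Suc k)) (\<lambda>ys. F (ys ! 0 # drop 2 ys))"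
proof -
  let ?Gs = "(\<lambda>ys. ys ! 0) # map (\<lambda>i ys. ys ! (i + 2)) [0..<k]"
  have la: "list_all2 (\<lambda>g G. comps g (Suc (Suc k)) G) (envR k) ?Gs"
    unfolding envR_def by (auto simp: list_all2_conv_all_nth nth_Cons' intro: comps_proj)
  have "comps f (length (envR k)) F" using assms by (simp add: envR_def)
  from comps_comp[OF this la] show ?thesis
  proof (rule comps_cong)
    fix ys :: "nat list" assume "length ys = Suc (Suc k)"
    then have "map (\<lambda>i. ys ! (i + 2)) [0..<k] = drop 2 ys"
      by (intro nth_equalityI) (auto simp: add.commute)
    then show "F (map (\<lambda>G. G ys) ?Gs) = F (ys ! 0 # drop 2 ys)" by (simp add: comp_def)
  qed
qed

lemma comps_cp: "cl k e \<Longrightarrow> comps (cp e k) k (ev e)"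
proof (induction e arbitrary: k)
  case (V i) then show ?case by (auto intro: comps_cong[OF comps_proj])
next
  case (K c) then show ?case by (simp add: comps_kR)
next
  case (Ad a b)
  then show ?case using comps_comp2[OF comps_addR, of "cp a k" k "ev a" "cp b k" "ev b"] by simp
next
  case (Mu a b)
  then show ?case using comps_comp2[OF comps_mulR, of "cp a k" k "ev a" "cp b k" "ev b"] by simp
next
  case (Mi a b)
  then show ?case using comps_comp2[OF comps_subR, of "cp b k" k "ev b" "cp a k" "ev a"] by simp
next
  case (Sm b e)
  then have cb: "comps (cp b k) k (ev b)" and ce: "comps (cp e (Suc k)) (Suc k) (ev e)" by auto
  have g: "comps (Comp addR [Proj 1, Comp (cp e (Suc k)) (envR k)]) (Suc (Suc k))
       (\<lambda>ys. ys ! 1 + ev e (ys ! 0 # drop 2 ys))"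
    using comps_comp2[OF comps_addR comps_proj[of 1 "Suc (Suc k)", simplified] comps_env[OF ce]] by simp
  have P: "comps (Prim (Comp Zero []) (Comp addR [Proj 1, Comp (cp e (Suc k)) (envR k)])) (Suc k)
     (\<lambda>xs. \<Sum>j<hd xs. ev e (j # tl xs))"
    using comps_prim[OF comps_zero g]
  proof (rule comps_cong)
    fix xs :: "nat list" assume "length xs = Suc k"
    show "rec_nat 0 (\<lambda>n r. (n # r # tl xs) ! 1 + ev e ((n # r # tl xs) ! 0 # drop 2 (n # r # tl xs))) (hd xs)
      = (\<Sum>j<hd xs. ev e (j # tl xs))"
      using rec_sum[of "\<lambda>n. ev e (n # tl xs)" "hd xs"] by simp
  qed
  have la: "list_all2 (\<lambda>g G. comps g k G) (cp b k # map Proj [0..<k]) (ev b # map (\<lambda>i xs. xs ! i) [0..<k])"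
    using cb la2_projs by simp
  have "comps (Prim (Comp Zero []) (Comp addR [Proj 1, Comp (cp e (Suc k)) (envR k)])) (length (cp b k # map Proj [0..<k])) (\<lambda>xs. \<Sum>j<hd xs. ev e (j # tl xs))"
    using P by simp
  note cc = comps_comp[OF this la]
  show ?case unfolding cp.simps using cc by (rule comps_cong) (simp add: map_projs map_projs')
next
  case (Pd b e)
  then have cb: "comps (cp b k) k (ev b)" and ce: "comps (cp e (Suc k)) (Suc k) (ev e)" by auto
  have g: "comps (Comp mulR [Proj 1, Comp (cp e (Suc k)) (envR k)]) (Suc (Suc k))
       (\<lambda>ys. ys ! 1 * ev e (ys ! 0 # drop 2 ys))"
    using comps_comp2[OF comps_mulR comps_proj[of 1 "Suc (Suc k)", simplified] comps_env[OF ce]] by simp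
  have P: "comps (Prim (kR 1) (Comp mulR [Proj 1, Comp (cp e (Suc k)) (envR k)])) (Suc k)
     (\<lambda>xs. \<Prod>j<hd xs. ev e (j # tl xs))"
    using comps_prim[OF comps_kR g]
  proof (rule comps_cong)
    fix xs :: "nat list" assume "length xs = Suc k"
    show "rec_nat 1 (\<lambda>n r. (n # r # tl xs) ! 1 * ev e ((n # r # tl xs) ! 0 # drop 2 (n # r # tl xs))) (hd xs)
      = (\<Prod>j<hd xs. ev e (j # tl xs))"
      using rec_prod[of "\<lambda>n. ev e (n # tl xs)" "hd xs"] by simp
  qed
  have la: "list_all2 (\<lambda>g G. comps g k G) (cp b k # map Proj [0..<k]) (ev b # map (\<lambda>i xs. xs ! i) [0..<k])"
    using cb la2_projs by simp
  have "comps (Prim (kR 1) (Comp mulR [Proj 1, Comp (cp e (Suc k)) (envR k)])) (length (cp b k # map Proj [0..<k])) (\<lambda>xs. \<Prod>j<hd xs. ev e (j # tl xs))"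
    using P by simp
  note cc = comps_comp[OF this la]
  show ?case unfolding cp.simps using cc by (rule comps_cong) (simp add: map_projs map_projs')
qed

lemma ce_from_ex:
  assumes "cl 2 T" "\<And>x. x \<in> X \<longleftrightarrow> (\<exists>y. ev T [y, x] = 0)"
  shows "ce X"
proof -
  have c: "comps (cp T 2) (Suc 1) (ev T)" using comps_cp[OF assms(1)] by (simp add: numeral_2_eq_2)
  show ?thesis unfolding ce_def
  proof (intro exI allI)
    fix x
    have "(\<exists>y. reval (Mn (cp T 2)) [x] y) \<longleftrightarrow> (\<exists>y. ev T [y, x] = 0)"
    proof
      assume "\<exists>y. ev T [y, x] = 0"
      then obtain y where "ev T [y, x] = 0" by blast
      then have "ev T [(LEAST y. ev T [y, x] = 0), x] = 0 \<and> (\<forall>z<(LEAST y. ev T [y, x] = 0). ev T [z, x] \<noteq> 0)"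
        by (metis (mono_tags, lifting) LeastI not_less_Least)
      then show "\<exists>y. reval (Mn (cp T 2)) [x] y" using comps_mn[OF c, of "[x]"] by auto
    qed (use comps_mn[OF c, of "[x]"] in auto)
    then show "x \<in> X \<longleftrightarrow> (\<exists>y. reval (Mn (cp T 2)) [x] y)" using assms(2) by simp
  qed
qed


fun sh :: "nat \<Rightarrow> ex \<Rightarrow> ex" where
  "sh k (V i) = V (if i < k then i else Suc i)"
| "sh k (K c) = K c"
| "sh k (Ad a b) = Ad (sh k a) (sh k b)"
| "sh k (Mu a b) = Mu (sh k a) (sh k b)"
| "sh k (Mi a b) = Mi (sh k a) (sh k b)"
| "sh k (Sm b e) = Sm (sh k b) (sh (Suc k) e)"
| "sh k (Pd b e) = Pd (sh k b) (sh (Suc k) e)"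

lemma ev_sh: "k \<le> length xs \<Longrightarrow> ev (sh k e) (take k xs @ j # drop k xs) = ev e xs"
proof (induction e arbitrary: k xs)
  case (V i)
  then show ?case by (auto simp: nth_append min_def nth_Cons')
next
  case (Sm b e)
  have "ev (sh (Suc k) e) (x # take k xs @ j # drop k xs) = ev e (x # xs)" for x
    using Sm.IH(2)[of "Suc k" "x # xs"] Sm.prems by simp
  then show ?case using Sm by simp
next
  case (Pd b e)
  have "ev (sh (Suc k) e) (x # take k xs @ j # drop k xs) = ev e (x # xs)" for x
    using Pd.IH(2)[of "Suc k" "x # xs"] Pd.prems by simp
  then show ?case using Pd by simp
qed auto

lemma ev_sh0[simp]: "ev (sh 0 e) (j # xs) = ev e xs"
  using ev_sh[of 0 xs e j] by simp

lemma cl_sh: "cl k e \<Longrightarrow> cl (Suc k) (sh j e)"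
  by (induction e arbitrary: k j) auto

definition "lee a b = Mi (K 1) (Mi a b)"
definition "eqe a b = Mu (lee a b) (lee b a)"
definition "negb t = Mi (K 1) t"
definition "tri a = Sm a (Ad (V 0) (K 1))"
definition "dsum a = Sm a (lee (tri (Ad (V 0) (K 1))) (sh 0 a))"
definition "fste a = Mi a (tri (dsum a))"
definition "snde a = Mi (dsum a) (fste a)"
definition "pee a b = Ad (tri (Ad a b)) a"
definition "pw2 a = Pd a (K 2)"

lemma ev_lee[simp]: "ev (lee a b) xs = (if ev a xs \<le> ev b xs then 1 else 0)"
  by (simp add: lee_def)
lemma ev_eqe[simp]: "ev (eqe a b) xs = (if ev a xs = ev b xs then 1 else 0)"
  by (simp add: eqe_def)
lemma ev_negb[simp]: "ev (negb t) xs = 1 - ev t xs"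
  by (simp add: negb_def)
lemma ev_tri[simp]: "ev (tri a) xs = triangle (ev a xs)"
proof -
  have "(\<Sum>j<n. Suc j) = triangle n" for n by (induction n) auto
  then show ?thesis by (simp add: tri_def)
qed
lemma ev_pw2[simp]: "ev (pw2 a) xs = 2 ^ ev a xs"
  by (simp add: pw2_def)
lemma ev_pee[simp]: "ev (pee a b) xs = prod_encode (ev a xs, ev b xs)"
  by (simp add: pee_def prod_encode_def)

lemma triangle_mono': "a \<le> b \<Longrightarrow> triangle a \<le> triangle (b::nat)"
  by (induction b) (auto simp: le_Suc_eq)

lemma triangle_ge: "n \<le> triangle n"
  by (induction n) auto

lemma dsum_val: "(\<Sum>j<k. if triangle (Suc j) \<le> k then 1 else 0) = fst (prod_decode k) + snd (prod_decode k)"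
proof -
  obtain m n where d: "prod_decode k = (m, n)" by fastforce
  have k: "k = triangle (m + n) + m" using prod_decode_inverse[of k] d by (simp add: prod_encode_def)
  have iff: "triangle (Suc j) \<le> k \<longleftrightarrow> j < m + n" for j
  proof
    assume "j < m + n" then have "Suc j \<le> m + n" by simp
    then show "triangle (Suc j) \<le> k" using triangle_mono'[of "Suc j" "m+n"] k by simp
  next
    assume a: "triangle (Suc j) \<le> k"
    show "j < m + n"
    proof (rule ccontr)
      assume "\<not> j < m + n" then have "Suc (m + n) \<le> Suc j" by simp
      then have "triangle (Suc (m + n)) \<le> triangle (Suc j)" by (rule triangle_mono')
      then show False using a k by simp
    qed
  qed
  have le: "m + n \<le> k" using triangle_ge[of "m+n"] k by simp
  have "(\<Sum>j<k. if triangle (Suc j) \<le> k then 1 else 0) = (\<Sum>j<k. if j < m + n then 1 else (0::nat))"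
    using iff by simp
  also have "\<dots> = card {j. j < k \<and> j < m + n}"
    by (simp add: sum.If_cases Int_def)
  also have "{j. j < k \<and> j < m + n} = {..<m+n}" using le by auto
  finally show ?thesis using d by simp
qed

lemma ev_dsum[simp]: "ev (dsum a) xs = fst (prod_decode (ev a xs)) + snd (prod_decode (ev a xs))"
  using dsum_val[of "ev a xs"] by (simp add: dsum_def del: triangle_Suc)

lemma ev_fste[simp]: "ev (fste a) xs = fst (prod_decode (ev a xs))"
proof -
  obtain m n where d: "prod_decode (ev a xs) = (m, n)" by fastforce
  have k: "ev a xs = triangle (m + n) + m" using prod_decode_inverse[of "ev a xs"] d by (simp add: prod_encode_def)
  have "ev (fste a) xs = ev a xs - triangle (m + n)" by (simp add: fste_def d)
  then show ?thesis using k d by simp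
qed

lemma ev_snde[simp]: "ev (snde a) xs = snd (prod_decode (ev a xs))"
  by (simp add: snde_def)

lemma cl_lee[simp]: "cl k (lee a b) = (cl k a \<and> cl k b)" by (auto simp add: lee_def)
lemma cl_eqe[simp]: "cl k (eqe a b) = (cl k a \<and> cl k b)" by (auto simp add: eqe_def)
lemma cl_negb[simp]: "cl k (negb a) = cl k a" by (simp add: negb_def)
lemma cl_tri[simp]: "cl k (tri a) = cl k a" by (simp add: tri_def)
lemma cl_pw2[simp]: "cl k (pw2 a) = cl k a" by (simp add: pw2_def)
lemma cl_pee[simp]: "cl k (pee a b) = (cl k a \<and> cl k b)" by (auto simp add: pee_def)
lemma cl_dsum[simp]: "cl k a \<Longrightarrow> cl k (dsum a)" by (simp add: dsum_def cl_sh)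
lemma cl_fste[simp]: "cl k a \<Longrightarrow> cl k (fste a)" by (simp add: fste_def)
lemma cl_snde[simp]: "cl k a \<Longrightarrow> cl k (snde a)" by (simp add: snde_def)

fun notinE :: "ex \<Rightarrow> ex list \<Rightarrow> ex" where
  "notinE c [] = K 1"
| "notinE c (d # ds) = Mu (negb (eqe c d)) (notinE c ds)"

fun encE :: "ex list \<Rightarrow> ex" where
  "encE [] = K 0"
| "encE (c # cs) = Ad (Mu (notinE c cs) (pw2 c)) (encE cs)"

lemma ev_notinE: "ev (notinE c ds) xs = (if ev c xs \<in> set (map (\<lambda>d. ev d xs) ds) then 0 else 1)"
  by (induction ds) auto

lemma ev_encE[simp]: "ev (encE cs) xs = set_encode (set (map (\<lambda>c. ev c xs) cs))"
  by (induction cs) (auto simp: ev_notinE set_encode_insert insert_absorb)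

lemma cl_encE[simp]: "(\<forall>c\<in>set cs. cl k c) \<Longrightarrow> cl k (encE cs)"
proof (induction cs)
  case (Cons c cs)
  have "cl k (notinE c ds)" if "\<forall>d\<in>set ds. cl k d" for ds using that Cons.prems by (induction ds) auto
  then show ?case using Cons by auto
qed simp

fun snds :: "nat \<Rightarrow> ex \<Rightarrow> ex" where
  "snds 0 y = y"
| "snds (Suc j) y = snde (snds j y)"

definition "parE j y = fste (snds j y)"

fun enc_list :: "nat list \<Rightarrow> nat" where
  "enc_list [] = 0"
| "enc_list (a # as) = prod_encode (a, enc_list as)"

definition dec_par :: "nat \<Rightarrow> nat \<Rightarrow> nat" where
  "dec_par j y = fst (prod_decode (((\<lambda>v. snd (prod_decode v)) ^^ j) y))"

lemma ev_parE[simp]: "ev (parE j y) xs = dec_par j (ev y xs)"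
proof -
  have "ev (snds j y) xs = ((\<lambda>v. snd (prod_decode v)) ^^ j) (ev y xs)"
    by (induction j) auto
  then show ?thesis by (simp add: parE_def dec_par_def)
qed

lemma cl_parE[simp]: "cl k y \<Longrightarrow> cl k (parE j y)"
proof -
  assume "cl k y" then have "cl k (snds j y)" by (induction j) auto
  then show ?thesis by (simp add: parE_def)
qed

lemma dec_par_enc: "j < length ps \<Longrightarrow> dec_par j (enc_list ps) = ps ! j"
proof -
  have "j \<le> length ps \<Longrightarrow> ((\<lambda>v. snd (prod_decode v)) ^^ j) (enc_list ps) = enc_list (drop j ps)" for j
  proof (induction j)
    case (Suc j)
    then show ?case by (cases "drop j ps") (auto simp: drop_Suc tl_drop[symmetric])
  qed simp
  moreover assume "j < length ps"
  ultimately show ?thesis unfolding dec_par_def by (cases "drop j ps") (auto simp: Cons_nth_drop_Suc[symmetric])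
qed


abbreviation pe :: "nat \<Rightarrow> nat \<Rightarrow> nat" where "pe a b \<equiv> prod_encode (a, b)"

definition dw :: "nat \<Rightarrow> nat \<Rightarrow> nat \<Rightarrow> nat \<Rightarrow> lit list" where
  "dw a b z z' = [Pos (Eq a a), Pos (Lt z b), Pos (Lt b z')]"

definition G1 :: "(lit set \<times> lit) set" where
  "G1 = {(set (dw a b z z'), Pos (Eq (pe a b) (pe a b))) | a b z z'. z \<le> a \<and> z' \<le> a}"
definition G2 :: "(lit set \<times> lit) set" where
  "G2 = {(set (dw a b z z' @ dw a' b' w w'), Neg (Eq (pe a b) (pe a' b'))) | a b z z' a' b' w w'.
     z \<le> a \<and> z' \<le> a \<and> w \<le> a' \<and> w' \<le> a' \<and> pe a b \<noteq> pe a' b'}"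
definition G3 :: "(lit set \<times> lit) set" where
  "G3 = {(set (dw a b z z' @ dw a' b' w w' @ [Pos (Lt a a')]), Pos (Lt (pe a b) (pe a' b'))) | a b z z' a' b' w w'.
     z \<le> a \<and> z' \<le> a \<and> w \<le> a' \<and> w' \<le> a'}"
definition G4 :: "(lit set \<times> lit) set" where
  "G4 = {(set (dw a b z z' @ dw a b' w w' @ [Pos (Lt b b')]), Pos (Lt (pe a b) (pe a b'))) | a b z z' b' w w'.
     z \<le> a \<and> z' \<le> a \<and> w \<le> a \<and> w' \<le> a}"
definition G5 :: "(lit set \<times> lit) set" where
  "G5 = {(set (dw a b z z' @ dw a' b' w w' @ [Pos (Lt a' a)]), Neg (Lt (pe a b) (pe a' b'))) | a b z z' a' b' w w'.
     z \<le> a \<and> z' \<le> a \<and> w \<le> a' \<and> w' \<le> a'}"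
definition G6 :: "(lit set \<times> lit) set" where
  "G6 = {(set (dw a b z z' @ dw a b' w w' @ [Pos (Lt b' b)]), Neg (Lt (pe a b) (pe a b'))) | a b z z' b' w w'.
     z \<le> a \<and> z' \<le> a \<and> w \<le> a \<and> w' \<le> a}"
definition G7 :: "(lit set \<times> lit) set" where
  "G7 = {(set (dw a b z z'), Neg (Lt (pe a b) (pe a b))) | a b z z'. z \<le> a \<and> z' \<le> a}"

definition Gam :: "(lit set \<times> lit) set" where
  "Gam = G1 \<union> G2 \<union> G3 \<union> G4 \<union> G5 \<union> G6 \<union> G7"

definition inD :: "nat struc \<Rightarrow> nat \<Rightarrow> nat \<Rightarrow> bool" where
  "inD A a b \<longleftrightarrow> a \<in> fst A \<and> (\<exists>z z'. z \<le> a \<and> z' \<le> a \<and> (z, b) \<in> snd A \<and> (b, z') \<in> snd A)"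

definition Cs :: "nat struc \<Rightarrow> nat struc" where
  "Cs A = ({pe a b | a b. inD A a b},
           {(pe a b, pe a' b') | a b a' b'. inD A a b \<and> inD A a' b' \<and>
              ((a, a') \<in> snd A \<or> (a = a' \<and> (b, b') \<in> snd A))})"

definition slin :: "'a struc \<Rightarrow> bool" where
  "slin A \<longleftrightarrow> snd A \<subseteq> fst A \<times> fst A \<and> (\<forall>a. (a, a) \<notin> snd A) \<and> trans (snd A) \<and>
     (\<forall>a\<in>fst A. \<forall>b\<in>fst A. a \<noteq> b \<longrightarrow> (a, b) \<in> snd A \<or> (b, a) \<in> snd A)"

lemma diag_simps:
  "Pos (Lt u v) \<in> diag S \<longleftrightarrow> u \<in> fst S \<and> v \<in> fst S \<and> (u, v) \<in> snd S"
  "Neg (Lt u v) \<in> diag S \<longleftrightarrow> u \<in> fst S \<and> v \<in> fst S \<and> (u, v) \<notin> snd S"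
  "Pos (Eq u v) \<in> diag S \<longleftrightarrow> u = v \<and> u \<in> fst S"
  "Neg (Eq u v) \<in> diag S \<longleftrightarrow> u \<in> fst S \<and> v \<in> fst S \<and> u \<noteq> v"
  unfolding diag_def by auto

lemma dw_sub: "wf_struc A \<Longrightarrow> set (dw a b z z') \<subseteq> diag A \<longleftrightarrow> a \<in> fst A \<and> (z, b) \<in> snd A \<and> (b, z') \<in> snd A"
  unfolding dw_def wf_struc_def by (auto simp: diag_simps)

lemma inD_iff: "wf_struc A \<Longrightarrow> inD A a b \<longleftrightarrow> (\<exists>z z'. z \<le> a \<and> z' \<le> a \<and> set (dw a b z z') \<subseteq> diag A)"
  by (auto simp: dw_sub inD_def)

lemma inD_in: "wf_struc A \<Longrightarrow> inD A a b \<Longrightarrow> a \<in> fst A \<and> b \<in> fst A"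
  unfolding inD_def wf_struc_def by auto

lemma Cs_fst: "e \<in> fst (Cs A) \<longleftrightarrow> (\<exists>a b. e = pe a b \<and> inD A a b)"
  unfolding Cs_def by auto

lemma Cs_snd: "(pe a b, pe a' b') \<in> snd (Cs A) \<longleftrightarrow> inD A a b \<and> inD A a' b' \<and>
              ((a, a') \<in> snd A \<or> (a = a' \<and> (b, b') \<in> snd A))"
  unfolding Cs_def by auto

lemma wf_Cs: "wf_struc (Cs A)"
  unfolding wf_struc_def Cs_def by auto

lemma apply_Gam: "apply_op Gam X = {\<phi>. \<exists>\<alpha>. (\<alpha>, \<phi>) \<in> Gam \<and> \<alpha> \<subseteq> X}"
  by (simp add: apply_op_def)

lemma Gam_correct:
  assumes wf: "wf_struc A" and lin: "slin A"
  shows "apply_op Gam (diag A) = diag (Cs A)"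
proof (rule set_eqI)
  fix \<phi>
  note I = inD_iff[OF wf]
  have irr: "(a, a) \<notin> snd A" for a using lin unfolding slin_def by auto
  have asy: "(a, b) \<in> snd A \<Longrightarrow> (b, a) \<notin> snd A" for a b
    using lin unfolding slin_def trans_def by blast
  have tot: "a \<in> fst A \<Longrightarrow> b \<in> fst A \<Longrightarrow> a \<noteq> b \<Longrightarrow> (b, a) \<notin> snd A \<Longrightarrow> (a, b) \<in> snd A" for a b
    using lin unfolding slin_def by blast
  show "\<phi> \<in> apply_op Gam (diag A) \<longleftrightarrow> \<phi> \<in> diag (Cs A)"
  proof
    assume "\<phi> \<in> apply_op Gam (diag A)"
    then obtain \<alpha> where h: "(\<alpha>, \<phi>) \<in> Gam" "\<alpha> \<subseteq> diag A" unfolding apply_op_def by auto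
    from h show "\<phi> \<in> diag (Cs A)" unfolding Gam_def
    proof (elim UnE)
      assume "(\<alpha>, \<phi>) \<in> G1" then show ?thesis using h(2) unfolding G1_def
        by (auto simp: diag_simps Cs_fst I; blast)
    next
      assume "(\<alpha>, \<phi>) \<in> G2" then show ?thesis using h(2) unfolding G2_def
        by (auto simp: diag_simps Cs_fst I; blast)
    next
      assume "(\<alpha>, \<phi>) \<in> G3" then show ?thesis using h(2) unfolding G3_def
        by (auto simp: diag_simps Cs_fst Cs_snd I dw_sub[OF wf]; blast)
    next
      assume "(\<alpha>, \<phi>) \<in> G4" then show ?thesis using h(2) unfolding G4_def
        by (auto simp: diag_simps Cs_fst Cs_snd I dw_sub[OF wf]; blast)
    next
      assume "(\<alpha>, \<phi>) \<in> G5" then show ?thesis using h(2) asy unfolding G5_def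
        by (auto simp: diag_simps Cs_fst Cs_snd I dw_sub[OF wf]; blast)
    next
      assume "(\<alpha>, \<phi>) \<in> G6" then show ?thesis using h(2) asy unfolding G6_def
        by (auto simp: diag_simps Cs_fst Cs_snd I dw_sub[OF wf]; blast)
    next
      assume "(\<alpha>, \<phi>) \<in> G7" then show ?thesis using h(2) irr unfolding G7_def
        by (auto simp: diag_simps Cs_fst Cs_snd I dw_sub[OF wf]; blast)
    qed
  next
    assume d: "\<phi> \<in> diag (Cs A)"
    show "\<phi> \<in> apply_op Gam (diag A)"
    proof (cases \<phi>)
      case (Pos at)
      then show ?thesis
      proof (cases at)
        case (Lt e e')
        with d Pos obtain a b a' b' where e: "e = pe a b" "e' = pe a' b'" "inD A a b" "inD A a' b'"
          "(a, a') \<in> snd A \<or> (a = a' \<and> (b, b') \<in> snd A)"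
          by (auto simp: diag_simps Cs_fst Cs_snd)
        then obtain z z' w w' where zw: "z \<le> a" "z' \<le> a" "set (dw a b z z') \<subseteq> diag A"
           "w \<le> a'" "w' \<le> a'" "set (dw a' b' w w') \<subseteq> diag A" using I by meson
        from e(5) show ?thesis
        proof
          assume "(a, a') \<in> snd A"
          then have "Pos (Lt a a') \<in> diag A" using wf unfolding wf_struc_def by (auto simp: diag_simps)
          then have "(set (dw a b z z' @ dw a' b' w w' @ [Pos (Lt a a')]), \<phi>) \<in> G3 \<and> set (dw a b z z' @ dw a' b' w w' @ [Pos (Lt a a')]) \<subseteq> diag A"
            using zw e Pos Lt unfolding G3_def by (auto simp: dw_def)
          then have "(set (dw a b z z' @ dw a' b' w w' @ [Pos (Lt a a')]), \<phi>) \<in> Gam \<and> set (dw a b z z' @ dw a' b' w w' @ [Pos (Lt a a')]) \<subseteq> diag A" unfolding Gam_def by blast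
          then show ?thesis unfolding apply_op_def by blast
        next
          assume "a = a' \<and> (b, b') \<in> snd A"
          then have "Pos (Lt b b') \<in> diag A" "a = a'" using wf unfolding wf_struc_def by (auto simp: diag_simps)
          then have "(set (dw a b z z' @ dw a b' w w' @ [Pos (Lt b b')]), \<phi>) \<in> G4 \<and> set (dw a b z z' @ dw a b' w w' @ [Pos (Lt b b')]) \<subseteq> diag A"
            using zw e Pos Lt unfolding G4_def by (auto simp: dw_def)
          then have "(set (dw a b z z' @ dw a b' w w' @ [Pos (Lt b b')]), \<phi>) \<in> Gam \<and> set (dw a b z z' @ dw a b' w w' @ [Pos (Lt b b')]) \<subseteq> diag A" unfolding Gam_def by blast
          then show ?thesis unfolding apply_op_def by blast
        qed
      next
        case (Eq e e')
        with d Pos obtain a b where e: "e = pe a b" "e' = e" "inD A a b"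
          by (auto simp: diag_simps Cs_fst)
        then obtain z z' where zw: "z \<le> a" "z' \<le> a" "set (dw a b z z') \<subseteq> diag A" using I by meson
        then have "(set (dw a b z z'), \<phi>) \<in> G1" using e Pos Eq unfolding G1_def by auto
        then have "(set (dw a b z z'), \<phi>) \<in> Gam" unfolding Gam_def by blast
        then show ?thesis using zw unfolding apply_op_def by blast
      qed
    next
      case (Neg at)
      then show ?thesis
      proof (cases at)
        case (Lt e e')
        with d Neg obtain a b a' b' where e: "e = pe a b" "e' = pe a' b'" "inD A a b" "inD A a' b'"
          "\<not> ((a, a') \<in> snd A \<or> (a = a' \<and> (b, b') \<in> snd A))"
          by (auto simp: diag_simps Cs_fst Cs_snd)
        then obtain z z' w w' where zw: "z \<le> a" "z' \<le> a" "set (dw a b z z') \<subseteq> diag A"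
           "w \<le> a'" "w' \<le> a'" "set (dw a' b' w w') \<subseteq> diag A" using I by meson
        have ab: "a \<in> fst A" "b \<in> fst A" "a' \<in> fst A" "b' \<in> fst A" using inD_in[OF wf] e by auto
        consider "a \<noteq> a'" | "a = a'" "b \<noteq> b'" | "a = a'" "b = b'" by blast
        then show ?thesis
        proof cases
          case 1
          then have "(a', a) \<in> snd A" using tot ab e(5) by blast
          then have "Pos (Lt a' a) \<in> diag A" using wf unfolding wf_struc_def by (auto simp: diag_simps)
          then have "(set (dw a b z z' @ dw a' b' w w' @ [Pos (Lt a' a)]), \<phi>) \<in> G5 \<and> set (dw a b z z' @ dw a' b' w w' @ [Pos (Lt a' a)]) \<subseteq> diag A"
            using zw e Neg Lt unfolding G5_def by (auto simp: dw_def)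
          then have "(set (dw a b z z' @ dw a' b' w w' @ [Pos (Lt a' a)]), \<phi>) \<in> Gam \<and> set (dw a b z z' @ dw a' b' w w' @ [Pos (Lt a' a)]) \<subseteq> diag A" unfolding Gam_def by blast
          then show ?thesis unfolding apply_op_def by blast
        next
          case 2
          then have "(b', b) \<in> snd A" using tot ab e(5) by blast
          then have "Pos (Lt b' b) \<in> diag A" using wf unfolding wf_struc_def by (auto simp: diag_simps)
          then have "(set (dw a b z z' @ dw a b' w w' @ [Pos (Lt b' b)]), \<phi>) \<in> G6 \<and> set (dw a b z z' @ dw a b' w w' @ [Pos (Lt b' b)]) \<subseteq> diag A"
            using zw e Neg Lt 2 unfolding G6_def by (auto simp: dw_def)
          then have "(set (dw a b z z' @ dw a b' w w' @ [Pos (Lt b' b)]), \<phi>) \<in> Gam \<and> set (dw a b z z' @ dw a b' w w' @ [Pos (Lt b' b)]) \<subseteq> diag A" unfolding Gam_def by blast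
          then show ?thesis unfolding apply_op_def by blast
        next
          case 3
          then have "(set (dw a b z z'), \<phi>) \<in> G7" using zw e Neg Lt unfolding G7_def by auto
        then have "(set (dw a b z z'), \<phi>) \<in> Gam" unfolding Gam_def by blast
          then show ?thesis using zw unfolding apply_op_def by blast
        qed
      next
        case (Eq e e')
        with d Neg obtain a b a' b' where e: "e = pe a b" "e' = pe a' b'" "inD A a b" "inD A a' b'" "e \<noteq> e'"
          by (auto simp: diag_simps Cs_fst)
        then obtain z z' w w' where zw: "z \<le> a" "z' \<le> a" "set (dw a b z z') \<subseteq> diag A"
           "w \<le> a'" "w' \<le> a'" "set (dw a' b' w w') \<subseteq> diag A" using I by meson
        then have "(set (dw a b z z' @ dw a' b' w w'), \<phi>) \<in> G2" using e Neg Eq unfolding G2_def by auto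
        then have "(set (dw a b z z' @ dw a' b' w w'), \<phi>) \<in> Gam" unfolding Gam_def by blast
        then show ?thesis using zw unfolding apply_op_def by auto
      qed
    qed
  qed
qed


definition cd :: "lit set \<times> lit \<Rightarrow> nat" where
  "cd = (\<lambda>(\<alpha>, \<phi>). prod_encode (set_encode (lit_code ` \<alpha>), lit_code \<phi>))"

definition "posLt u v = pee (K 0) (pee (K 0) (pee u v))"
definition "posEq u v = pee (K 0) (pee (K 1) (pee u v))"
definition "negLt u v = pee (K 1) (pee (K 0) (pee u v))"
definition "negEq u v = pee (K 1) (pee (K 1) (pee u v))"

lemma ev_lits[simp]:
  "ev (posLt u v) xs = lit_code (Pos (Lt (ev u xs) (ev v xs)))"
  "ev (posEq u v) xs = lit_code (Pos (Eq (ev u xs) (ev v xs)))"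
  "ev (negLt u v) xs = lit_code (Neg (Lt (ev u xs) (ev v xs)))"
  "ev (negEq u v) xs = lit_code (Neg (Eq (ev u xs) (ev v xs)))"
  by (simp_all add: posLt_def posEq_def negLt_def negEq_def)

lemma cl_lits[simp]:
  "cl k (posLt u v) = (cl k u \<and> cl k v)"
  "cl k (posEq u v) = (cl k u \<and> cl k v)"
  "cl k (negLt u v) = (cl k u \<and> cl k v)"
  "cl k (negEq u v) = (cl k u \<and> cl k v)"
  by (auto simp add: posLt_def posEq_def negLt_def negEq_def)

definition "dwE a b z z' = [posEq a a, posLt z b, posLt b z']"

definition famT :: "ex list \<Rightarrow> ex \<Rightarrow> ex \<Rightarrow> ex" where
  "famT W f v = negb (Mu (eqe (V 1) (pee (encE W) f)) v)"

lemma ev_famT: "ev (famT W f v) [y, x] = 0 \<longleftrightarrow>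
   x = prod_encode (set_encode (set (map (\<lambda>c. ev c [y, x]) W)), ev f [y, x]) \<and> ev v [y, x] \<noteq> 0"
  by (simp add: famT_def Suc_le_eq)

lemma cl_famT: "(\<forall>c\<in>set W. cl k c) \<Longrightarrow> cl k f \<Longrightarrow> cl k v \<Longrightarrow> 1 < k \<Longrightarrow> cl k (famT W f v)"
  by (simp add: famT_def)

abbreviation "P j \<equiv> parE j (V 0)"

lemma ev_P[simp]: "ev (P j) [y, x] = dec_par j y" by simp

definition "T1 = famT (dwE (P 0) (P 1) (P 2) (P 3)) (posEq (pee (P 0) (P 1)) (pee (P 0) (P 1)))
   (Mu (lee (P 2) (P 0)) (lee (P 3) (P 0)))"
definition "T2 = famT (dwE (P 0) (P 1) (P 2) (P 3) @ dwE (P 4) (P 5) (P 6) (P 7))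
   (negEq (pee (P 0) (P 1)) (pee (P 4) (P 5)))
   (Mu (Mu (lee (P 2) (P 0)) (lee (P 3) (P 0))) (Mu (Mu (lee (P 6) (P 4)) (lee (P 7) (P 4)))
      (negb (eqe (pee (P 0) (P 1)) (pee (P 4) (P 5))))))"
definition "T3 = famT (dwE (P 0) (P 1) (P 2) (P 3) @ dwE (P 4) (P 5) (P 6) (P 7) @ [posLt (P 0) (P 4)])
   (posLt (pee (P 0) (P 1)) (pee (P 4) (P 5)))
   (Mu (Mu (lee (P 2) (P 0)) (lee (P 3) (P 0))) (Mu (lee (P 6) (P 4)) (lee (P 7) (P 4))))"
definition "T4 = famT (dwE (P 0) (P 1) (P 2) (P 3) @ dwE (P 0) (P 4) (P 5) (P 6) @ [posLt (P 1) (P 4)])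
   (posLt (pee (P 0) (P 1)) (pee (P 0) (P 4)))
   (Mu (Mu (lee (P 2) (P 0)) (lee (P 3) (P 0))) (Mu (lee (P 5) (P 0)) (lee (P 6) (P 0))))"
definition "T5 = famT (dwE (P 0) (P 1) (P 2) (P 3) @ dwE (P 4) (P 5) (P 6) (P 7) @ [posLt (P 4) (P 0)])
   (negLt (pee (P 0) (P 1)) (pee (P 4) (P 5)))
   (Mu (Mu (lee (P 2) (P 0)) (lee (P 3) (P 0))) (Mu (lee (P 6) (P 4)) (lee (P 7) (P 4))))"
definition "T6 = famT (dwE (P 0) (P 1) (P 2) (P 3) @ dwE (P 0) (P 4) (P 5) (P 6) @ [posLt (P 4) (P 1)])
   (negLt (pee (P 0) (P 1)) (pee (P 0) (P 4)))
   (Mu (Mu (lee (P 2) (P 0)) (lee (P 3) (P 0))) (Mu (lee (P 5) (P 0)) (lee (P 6) (P 0))))"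
definition "T7 = famT (dwE (P 0) (P 1) (P 2) (P 3)) (negLt (pee (P 0) (P 1)) (pee (P 0) (P 1)))
   (Mu (lee (P 2) (P 0)) (lee (P 3) (P 0)))"

definition "TT = Mu T1 (Mu T2 (Mu T3 (Mu T4 (Mu T5 (Mu T6 T7)))))"

lemma cl_TT: "cl 2 TT"
  unfolding TT_def T1_def T2_def T3_def T4_def T5_def T6_def T7_def
  by (auto intro!: cl_famT simp: dwE_def)

lemma ex8: "(\<exists>y. Q (dec_par 0 y) (dec_par 1 y) (dec_par 2 y) (dec_par 3 y) (dec_par 4 y) (dec_par 5 y)
   (dec_par 6 y) (dec_par 7 y)) \<longleftrightarrow> (\<exists>a b c d e f g h. Q a b c d e f g h)"
proof
  assume "\<exists>a b c d e f g h. Q a b c d e f g h"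
  then obtain a b c d e f g h where q: "Q a b c d e f g h" by blast
  let ?y = "enc_list [a, b, c, d, e, f, g, h]"
  have "dec_par j ?y = [a, b, c, d, e, f, g, h] ! j" if "j < 8" for j
    using dec_par_enc[of j "[a, b, c, d, e, f, g, h]"] that by simp
  then show "\<exists>y. Q (dec_par 0 y) (dec_par 1 y) (dec_par 2 y) (dec_par 3 y) (dec_par 4 y) (dec_par 5 y)
   (dec_par 6 y) (dec_par 7 y)" using q by (intro exI[of _ ?y]) simp
qed blast

lemma cd_set: "cd (set W, f) = prod_encode (set_encode (set (map lit_code W)), lit_code f)"
  by (simp add: cd_def)

lemma fam_ok:
  assumes "\<And>y. ev T [y, x] = 0 \<longleftrightarrow> Q (dec_par 0 y) (dec_par 1 y) (dec_par 2 y) (dec_par 3 y) (dec_par 4 y) (dec_par 5 y)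
   (dec_par 6 y) (dec_par 7 y)"
    "(\<exists>a b c d e f g h. Q a b c d e f g h) \<longleftrightarrow> x \<in> S"
  shows "(\<exists>y. ev T [y, x] = 0) \<longleftrightarrow> x \<in> S"
  using assms ex8[of Q] by simp

lemmas evsimps = dwE_def dw_def ev_famT cd_def

lemma T1_ok: "(\<exists>y. ev T1 [y, x] = 0) \<longleftrightarrow> x \<in> cd ` G1"
  apply (rule fam_ok[where Q = "\<lambda>a b z z' a' b' w w'.
      x = cd (set (dw a b z z'), Pos (Eq (pe a b) (pe a b))) \<and> z \<le> a \<and> z' \<le> a"])
  subgoal by (auto simp: T1_def evsimps simp del: lit_code.simps atom_code.simps)
  subgoal unfolding G1_def by blast
  done

lemma T2_ok: "(\<exists>y. ev T2 [y, x] = 0) \<longleftrightarrow> x \<in> cd ` G2"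
  apply (rule fam_ok[where Q = "\<lambda>a b z z' a' b' w w'.
      x = cd (set (dw a b z z' @ dw a' b' w w'), Neg (Eq (pe a b) (pe a' b'))) \<and>
     z \<le> a \<and> z' \<le> a \<and> w \<le> a' \<and> w' \<le> a' \<and> pe a b \<noteq> pe a' b'"])
  subgoal by (auto simp: T2_def evsimps simp del: lit_code.simps atom_code.simps)
  subgoal unfolding G2_def by blast
  done

lemma T3_ok: "(\<exists>y. ev T3 [y, x] = 0) \<longleftrightarrow> x \<in> cd ` G3"
  apply (rule fam_ok[where Q = "\<lambda>a b z z' a' b' w w'.
      x = cd (set (dw a b z z' @ dw a' b' w w' @ [Pos (Lt a a')]), Pos (Lt (pe a b) (pe a' b'))) \<and>
     z \<le> a \<and> z' \<le> a \<and> w \<le> a' \<and> w' \<le> a'"])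
  subgoal by (auto simp: T3_def evsimps simp del: lit_code.simps atom_code.simps)
  subgoal unfolding G3_def by blast
  done

lemma T4_ok: "(\<exists>y. ev T4 [y, x] = 0) \<longleftrightarrow> x \<in> cd ` G4"
  apply (rule fam_ok[where Q = "\<lambda>a b z z' b' w w' u.
      x = cd (set (dw a b z z' @ dw a b' w w' @ [Pos (Lt b b')]), Pos (Lt (pe a b) (pe a b'))) \<and>
     z \<le> a \<and> z' \<le> a \<and> w \<le> a \<and> w' \<le> a"])
  subgoal by (auto simp: T4_def evsimps simp del: lit_code.simps atom_code.simps)
  subgoal unfolding G4_def by blast
  done

lemma T5_ok: "(\<exists>y. ev T5 [y, x] = 0) \<longleftrightarrow> x \<in> cd ` G5"
  apply (rule fam_ok[where Q = "\<lambda>a b z z' a' b' w w'.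
      x = cd (set (dw a b z z' @ dw a' b' w w' @ [Pos (Lt a' a)]), Neg (Lt (pe a b) (pe a' b'))) \<and>
     z \<le> a \<and> z' \<le> a \<and> w \<le> a' \<and> w' \<le> a'"])
  subgoal by (auto simp: T5_def evsimps simp del: lit_code.simps atom_code.simps)
  subgoal unfolding G5_def by blast
  done

lemma T6_ok: "(\<exists>y. ev T6 [y, x] = 0) \<longleftrightarrow> x \<in> cd ` G6"
  apply (rule fam_ok[where Q = "\<lambda>a b z z' b' w w' u.
      x = cd (set (dw a b z z' @ dw a b' w w' @ [Pos (Lt b' b)]), Neg (Lt (pe a b) (pe a b'))) \<and>
     z \<le> a \<and> z' \<le> a \<and> w \<le> a \<and> w' \<le> a"])
  subgoal by (auto simp: T6_def evsimps simp del: lit_code.simps atom_code.simps)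
  subgoal unfolding G6_def by blast
  done

lemma T7_ok: "(\<exists>y. ev T7 [y, x] = 0) \<longleftrightarrow> x \<in> cd ` G7"
  apply (rule fam_ok[where Q = "\<lambda>a b z z' a' b' w w'.
      x = cd (set (dw a b z z'), Neg (Lt (pe a b) (pe a b))) \<and> z \<le> a \<and> z' \<le> a"])
  subgoal by (auto simp: T7_def evsimps simp del: lit_code.simps atom_code.simps)
  subgoal unfolding G7_def by blast
  done

lemma enum_Gam: "enum_op Gam"
  unfolding enum_op_def
proof
  show "\<forall>(\<alpha>, \<phi>)\<in>Gam. finite \<alpha>"
    unfolding Gam_def G1_def G2_def G3_def G4_def G5_def G6_def G7_def by auto
  have eq: "(\<lambda>(\<alpha>, \<phi>). prod_encode (set_encode (lit_code ` \<alpha>), lit_code \<phi>)) = cd"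
    by (simp add: cd_def)
  show "ce ((\<lambda>(\<alpha>, \<phi>). prod_encode (set_encode (lit_code ` \<alpha>), lit_code \<phi>)) ` Gam)"
    unfolding eq
  proof (rule ce_from_ex[OF cl_TT])
    fix x
    have "ev TT [y, x] = 0 \<longleftrightarrow> ev T1 [y, x] = 0 \<or> ev T2 [y, x] = 0 \<or> ev T3 [y, x] = 0 \<or>
      ev T4 [y, x] = 0 \<or> ev T5 [y, x] = 0 \<or> ev T6 [y, x] = 0 \<or> ev T7 [y, x] = 0" for y
      unfolding TT_def by simp
    then have "(\<exists>y. ev TT [y, x] = 0) \<longleftrightarrow> (\<exists>y. ev T1 [y, x] = 0) \<or> (\<exists>y. ev T2 [y, x] = 0) \<or>
      (\<exists>y. ev T3 [y, x] = 0) \<or> (\<exists>y. ev T4 [y, x] = 0) \<or> (\<exists>y. ev T5 [y, x] = 0) \<or>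
      (\<exists>y. ev T6 [y, x] = 0) \<or> (\<exists>y. ev T7 [y, x] = 0)" by blast
    then show "x \<in> cd ` Gam \<longleftrightarrow> (\<exists>y. ev TT [y, x] = 0)"
      unfolding T1_ok T2_ok T3_ok T4_ok T5_ok T6_ok T7_ok Gam_def by blast
  qed
qed


lemma iso_refl: "iso S S"
  unfolding iso_def by (intro exI[of _ id]) auto

lemma iso_sym: assumes "iso S T" shows "iso T S"
proof -
  obtain f where f: "bij_betw f (fst S) (fst T)"
    "\<forall>a\<in>fst S. \<forall>b\<in>fst S. (a, b) \<in> snd S \<longleftrightarrow> (f a, f b) \<in> snd T"
    using assms unfolding iso_def by blast
  let ?g = "inv_into (fst S) f"
  have g: "bij_betw ?g (fst T) (fst S)" using f(1) by (rule bij_betw_inv_into)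
  have "\<forall>a\<in>fst T. \<forall>b\<in>fst T. (a, b) \<in> snd T \<longleftrightarrow> (?g a, ?g b) \<in> snd S"
  proof (intro ballI)
    fix a b assume ab: "a \<in> fst T" "b \<in> fst T"
    then have "?g a \<in> fst S" "?g b \<in> fst S" "f (?g a) = a" "f (?g b) = b"
      using g f(1) by (auto simp: bij_betw_def f_inv_into_f)
    then show "(a, b) \<in> snd T \<longleftrightarrow> (?g a, ?g b) \<in> snd S" using f(2) by metis
  qed
  then show ?thesis using g unfolding iso_def by blast
qed

lemma iso_trans: assumes "iso S T" "iso T U" shows "iso S U"
proof -
  obtain f where f: "bij_betw f (fst S) (fst T)"
    "\<forall>a\<in>fst S. \<forall>b\<in>fst S. (a, b) \<in> snd S \<longleftrightarrow> (f a, f b) \<in> snd T"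
    using assms unfolding iso_def by blast
  obtain g where g: "bij_betw g (fst T) (fst U)"
    "\<forall>a\<in>fst T. \<forall>b\<in>fst T. (a, b) \<in> snd T \<longleftrightarrow> (g a, g b) \<in> snd U"
    using assms unfolding iso_def by blast
  have "bij_betw (g \<circ> f) (fst S) (fst U)" using f(1) g(1) by (rule bij_betw_trans)
  moreover have "\<forall>a\<in>fst S. \<forall>b\<in>fst S. (a, b) \<in> snd S \<longleftrightarrow> ((g \<circ> f) a, (g \<circ> f) b) \<in> snd U"
    using f g bij_betwE[OF f(1)] by auto
  ultimately show ?thesis unfolding iso_def by blast
qed

lemma iso_rev: "iso S T \<Longrightarrow> iso (rev_order S) (rev_order T)"
  unfolding iso_def rev_order_def by auto

lemma rev_rev[simp]: "rev_order (rev_order S) = S"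
  unfolding rev_order_def by simp

lemma rev_fst[simp]: "fst (rev_order S) = fst S" and rev_snd[simp]: "snd (rev_order S) = (snd S)\<inverse>"
  unfolding rev_order_def by auto

lemma wf_struc_rev: "wf_struc S \<Longrightarrow> wf_struc (rev_order S)"
  unfolding wf_struc_def rev_order_def by auto

lemma slin_rev: assumes "slin S" shows "slin (rev_order S)"
proof -
  have "trans ((snd S)\<inverse>)" using assms unfolding slin_def trans_def by blast
  then show ?thesis using assms unfolding slin_def by auto
qed

lemma slin_iso:
  assumes "iso S T" "slin T" "wf_struc S"
  shows "slin S"
proof -
  obtain f where f: "bij_betw f (fst S) (fst T)"
    "\<forall>a\<in>fst S. \<forall>b\<in>fst S. (a, b) \<in> snd S \<longleftrightarrow> (f a, f b) \<in> snd T"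
    using assms unfolding iso_def by blast
  have sub: "snd S \<subseteq> fst S \<times> fst S" using assms(3) unfolding wf_struc_def .
  have inj: "inj_on f (fst S)" and im: "\<And>a. a \<in> fst S \<Longrightarrow> f a \<in> fst T" using f(1) bij_betwE bij_betw_imp_inj_on by blast+
  show ?thesis unfolding slin_def
  proof (intro conjI allI ballI impI)
    show "snd S \<subseteq> fst S \<times> fst S" by (rule sub)
  next
    fix a show "(a, a) \<notin> snd S" using f(2) sub assms(2) unfolding slin_def by blast
  next
    show "trans (snd S)" unfolding trans_def
    proof (intro allI impI)
      fix x y z assume "(x, y) \<in> snd S" "(y, z) \<in> snd S"
      moreover then have "x \<in> fst S" "y \<in> fst S" "z \<in> fst S" using sub by auto
      ultimately show "(x, z) \<in> snd S" using f(2) assms(2) unfolding slin_def trans_def by meson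
    qed
  next
    fix a b assume "a \<in> fst S" "b \<in> fst S" "a \<noteq> b"
    moreover then have "f a \<noteq> f b" using inj inj_on_def by metis
    ultimately show "(a, b) \<in> snd S \<or> (b, a) \<in> snd S" using f(2) im assms(2) unfolding slin_def by blast
  qed
qed

definition swo :: "'a struc \<Rightarrow> bool" where
  "swo S \<longleftrightarrow> slin S \<and> wf (snd S)"

definition rc :: "'a struc \<Rightarrow> 'a rel" where
  "rc S = {(a, b). a \<in> fst S \<and> b \<in> fst S \<and> (a = b \<or> (a, b) \<in> snd S)}"

lemma Field_rc: "Field (rc S) = fst S"
  unfolding rc_def Field_def by auto

lemma rc_minus: "slin S \<Longrightarrow> rc S - Id = snd S"
  unfolding rc_def slin_def by auto

lemma Well_order_rc: assumes "swo S" shows "Well_order (rc S)"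
proof -
  have s: "slin S" and w: "wf (snd S)" using assms unfolding swo_def by auto
  show ?thesis
    unfolding order_on_defs Field_rc rc_minus[OF s]
  proof (intro conjI)
    show "rc S \<subseteq> fst S \<times> fst S" unfolding rc_def by auto
    show "refl_on (fst S) (rc S)" unfolding rc_def refl_on_def by auto
    show "trans (rc S)" using s unfolding rc_def slin_def trans_def by blast
    show "antisym (rc S)" using s unfolding rc_def slin_def antisym_def trans_def by blast
    show "total_on (fst S) (rc S)" using s unfolding rc_def slin_def total_on_def by blast
    show "wf (snd S)" by (rule w)
  qed
qed

lemma mono_ordLeq:
  assumes W: "Well_order r" and W': "Well_order r'"
    and fF: "\<And>a. a \<in> Field r \<Longrightarrow> f a \<in> Field r'"
    and fm: "\<And>a b. (a, b) \<in> r \<Longrightarrow> a \<noteq> b \<Longrightarrow> (f a, f b) \<in> r' \<and> f a \<noteq> f b"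
  shows "(r, r') \<in> ordLeq"
proof (rule ccontr)
  assume "(r, r') \<notin> ordLeq"
  then have "(r', r) \<in> ordLess" using not_ordLeq_iff_ordLess W W' by blast
  then obtain g where emb: "embed r' r g" and nb: "\<not> bij_betw g (Field r') (Field r)"
    unfolding ordLess_def embedS_def by auto
  have gF: "g ` Field r' \<subseteq> Field r" using emb by (rule embed_Field)
  have ginj: "inj_on g (Field r')" using embed_inj_on[OF W' emb] .
  have of: "wo_rel.ofilter r (g ` Field r')" using embed_Field_ofilter[OF W' W emb] .
  have gc: "compat r' r g" using embed_compat[OF emb] .
  from nb ginj gF obtain a where a: "a \<in> Field r" "a \<notin> g ` Field r'"
    unfolding bij_betw_def by blast
  have wr: "wo_rel r" using W unfolding wo_rel_def .
  have below: "(b, a) \<in> r \<and> b \<noteq> a" if "b \<in> g ` Field r'" for b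
  proof -
    have bF: "b \<in> Field r" using that gF by blast
    have "(a, b) \<notin> r"
    proof
      assume "(a, b) \<in> r"
      then have "a \<in> under r b" unfolding under_def by simp
      moreover have "under r b \<subseteq> g ` Field r'" using of that unfolding wo_rel.ofilter_def[OF wr] by blast
      ultimately show False using a by blast
    qed
    then show ?thesis using wo_rel.TOTALS[OF wr] a bF that by blast
  qed
  define h where "h = g \<circ> f"
  have hF: "h x \<in> g ` Field r'" if "x \<in> Field r" for x using fF that unfolding h_def by auto
  have hm: "(h x, h y) \<in> r \<and> h x \<noteq> h y" if "(x, y) \<in> r" "x \<noteq> y" for x y
  proof -
    have 1: "(f x, f y) \<in> r'" "f x \<noteq> f y" using fm that by auto
    then have "f x \<in> Field r'" "f y \<in> Field r'" by (auto simp: Field_def)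
    then show ?thesis using 1 gc ginj unfolding compat_def inj_on_def h_def by auto
  qed
  have wfr: "wf (r - Id)" using W unfolding order_on_defs by blast
  let ?B = "{x \<in> Field r. (h x, x) \<in> r - Id}"
  have "a \<in> ?B" using a below[OF hF[OF a(1)]] by auto
  then obtain x where x: "x \<in> ?B" "\<And>y. (y, x) \<in> r - Id \<Longrightarrow> y \<notin> ?B"
    using wf_eq_minimal[THEN iffD1, OF wfr, rule_format, of a ?B] by blast
  have hx: "(h x, x) \<in> r" "h x \<noteq> x" "x \<in> Field r" using x(1) by auto
  have "(h (h x), h x) \<in> r - Id" using hm[OF hx(1,2)] by auto
  moreover have "h x \<in> Field r" using hx(1) by (auto simp: Field_def)
  ultimately have "h x \<in> ?B" by blast
  then show False using x(2) hx by blast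
qed

lemma sandwich:
  assumes S: "swo S" and T: "swo T"
    and f1: "\<And>a. a \<in> fst S \<Longrightarrow> f a \<in> fst T" and f2: "\<And>a b. (a, b) \<in> snd S \<Longrightarrow> (f a, f b) \<in> snd T"
    and g1: "\<And>a. a \<in> fst T \<Longrightarrow> g a \<in> fst S" and g2: "\<And>a b. (a, b) \<in> snd T \<Longrightarrow> (g a, g b) \<in> snd S"
  shows "iso S T"
proof -
  have WS: "Well_order (rc S)" and WT: "Well_order (rc T)" using Well_order_rc[OF S] Well_order_rc[OF T] by auto
  have sS: "slin S" and sT: "slin T" using S T unfolding swo_def by auto
  have irrT: "(x, x) \<notin> snd T" for x using sT unfolding slin_def by auto
  have irrS: "(x, x) \<notin> snd S" for x using sS unfolding slin_def by auto
  have "(rc S, rc T) \<in> ordLeq"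
  proof (rule mono_ordLeq[OF WS WT])
    show "f a \<in> Field (rc T)" if "a \<in> Field (rc S)" for a using f1 that by (simp add: Field_rc)
    show "(f a, f b) \<in> rc T \<and> f a \<noteq> f b" if "(a, b) \<in> rc S" "a \<noteq> b" for a b
      using that f1 f2[of a b] irrT unfolding rc_def by auto
  qed
  moreover have "(rc T, rc S) \<in> ordLeq"
  proof (rule mono_ordLeq[OF WT WS])
    show "g a \<in> Field (rc S)" if "a \<in> Field (rc T)" for a using g1 that by (simp add: Field_rc)
    show "(g a, g b) \<in> rc S \<and> g a \<noteq> g b" if "(a, b) \<in> rc T" "a \<noteq> b" for a b
      using that g1 g2[of a b] irrS unfolding rc_def by auto
  qed
  ultimately have "(rc S, rc T) \<in> ordIso" using ordIso_iff_ordLeq by blast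
  then obtain h where h: "BNF_Wellorder_Embedding.iso (rc S) (rc T) h" unfolding ordIso_def by blast
  then have hb: "bij_betw h (fst S) (fst T)"
    and hr: "\<forall>a\<in>fst S. \<forall>b\<in>fst S. (a, b) \<in> rc S \<longleftrightarrow> (h a, h b) \<in> rc T"
    unfolding BNF_Wellorder_Embedding.iso_iff2 Field_rc by auto
  have "\<forall>a\<in>fst S. \<forall>b\<in>fst S. (a, b) \<in> snd S \<longleftrightarrow> (h a, h b) \<in> snd T"
  proof (intro ballI)
    fix a b assume ab: "a \<in> fst S" "b \<in> fst S"
    have "a = b \<longleftrightarrow> h a = h b" using hb ab unfolding bij_betw_def inj_on_def by auto
    moreover have "h a \<in> fst T" "h b \<in> fst T" using hb ab bij_betwE by blast+
    ultimately show "(a, b) \<in> snd S \<longleftrightarrow> (h a, h b) \<in> snd T"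
      using hr ab irrS irrT unfolding rc_def by auto
  qed
  then show ?thesis using hb unfolding Defs.iso_def by blast
qed


lemma lex_app:
  assumes "length u = length u'"
  shows "(u @ v, u' @ v') \<in> lex r \<longleftrightarrow> ((u, u') \<in> lex r \<and> length v = length v') \<or> (u = u' \<and> (v, v') \<in> lex r)"
  using assms
proof (induction u arbitrary: u')
  case Nil then show ?case by simp
next
  case (Cons x xs)
  then obtain y ys where u': "u' = y # ys" by (cases u') auto
  show ?case using Cons.IH[of ys] Cons.prems u' by auto
qed

lemma lex_hd_le: "(x # xs, y # ys) \<in> lex less_than \<Longrightarrow> x \<le> y"
  by auto

lemma lex_lt_irrefl: "(x, x) \<notin> lex less_than"
  by (simp add: irrefl_def)

lemma lex_lt_trans: "(x, y) \<in> lex less_than \<Longrightarrow> (y, z) \<in> lex less_than \<Longrightarrow> (x, z) \<in> lex less_than"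
  using lexord_trans[of x y less_than z] trans_less_than by (auto simp: lexord_lex)

lemma lex_lt_total: "length x = length y \<Longrightarrow> x \<noteq> y \<Longrightarrow> (x, y) \<in> lex less_than \<or> (y, x) \<in> lex less_than"
proof -
  have "total less_than" by (auto simp: total_on_def)
  then have "total (lexord less_than)" by (rule total_lexord)
  moreover assume "length x = length y" "x \<noteq> y"
  ultimately show ?thesis by (auto simp: lexord_lex total_on_def)
qed

lemma Lo_simps:
  "fst (omega_pow m) = {xs. length xs = m}"
  "(x, y) \<in> snd (omega_pow m) \<longleftrightarrow> length x = m \<and> length y = m \<and> (x, y) \<in> lex less_than"
  unfolding omega_pow_def by auto

lemma swo_Lo: "swo (omega_pow m)"
  unfolding swo_def slin_def
proof (intro conjI allI ballI impI)
  show "snd (omega_pow m) \<subseteq> fst (omega_pow m) \<times> fst (omega_pow m)" by (auto simp: Lo_simps)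
  show "(a, a) \<notin> snd (omega_pow m)" for a by (simp add: Lo_simps lex_lt_irrefl)
  show "trans (snd (omega_pow m))" unfolding trans_def by (auto simp: Lo_simps intro: lex_lt_trans)
  show "(a, b) \<in> snd (omega_pow m) \<or> (b, a) \<in> snd (omega_pow m)"
    if "a \<in> fst (omega_pow m)" "b \<in> fst (omega_pow m)" "a \<noteq> b" for a b
    using that lex_lt_total[of a b] by (auto simp: Lo_simps)
  show "wf (snd (omega_pow m))"
    by (rule wf_subset[OF wf_lex[OF wf_less_than]]) (auto simp: Lo_simps)
qed

lemma wf_Lo: "wf_struc (omega_pow m)"
  unfolding wf_struc_def by (auto simp: Lo_simps)

lemma not_iso_Lo_rev:
  assumes "1 \<le> m" shows "\<not> iso (omega_pow m) (rev_order (omega_pow m))"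
proof
  assume "iso (omega_pow m) (rev_order (omega_pow m))"
  then obtain h where hb: "bij_betw h {xs. length xs = m} {xs. length xs = m}"
    and hr: "\<And>a b. length a = m \<Longrightarrow> length b = m \<Longrightarrow> (a, b) \<in> snd (omega_pow m) \<longleftrightarrow> (h b, h a) \<in> snd (omega_pow m)"
    unfolding iso_def by (auto simp: Lo_simps)
  let ?z = "replicate m (0::nat)"
  have lz: "length ?z = m" by simp
  let ?w = "h ?z"
  have lw: "length ?w = m" using hb lz bij_betwE by blast
  have mpos: "m = Suc (m - 1)" using assms by simp
  obtain c cs where w: "?w = c # cs" using lw assms by (cases ?w) auto
  let ?u = "Suc c # cs"
  have lu: "length ?u = m" using lw w by simp
  then obtain v where v: "length v = m" "h v = ?u" using hb unfolding bij_betw_def by (metis (mono_tags, lifting) imageE mem_Collect_eq)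
  have "v \<noteq> ?z" using v w by auto
  have zv: "(?z, v) \<in> lex less_than"
  proof -
    have "\<forall>v. length v = m \<longrightarrow> v \<noteq> replicate m 0 \<longrightarrow> (replicate m 0, v) \<in> lex less_than" for m
    proof (induction m)
      case 0 then show ?case by simp
    next
      case (Suc m)
      show ?case
      proof (intro allI impI)
        fix v :: "nat list" assume "length v = Suc m" "v \<noteq> replicate (Suc m) 0"
        then obtain d ds where "v = d # ds" "length ds = m" by (cases v) auto
        then show "(replicate (Suc m) 0, v) \<in> lex less_than" using Suc.IH \<open>v \<noteq> replicate (Suc m) 0\<close>
          by (cases d) auto
      qed
    qed
    then show ?thesis using v \<open>v \<noteq> ?z\<close> by blast
  qed
  then have "(h v, ?w) \<in> snd (omega_pow m)" using hr[OF lz v(1)] lz v(1) by (simp add: Lo_simps)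
  then have "(?u, c # cs) \<in> lex less_than" using v w by (simp add: Lo_simps)
  then show False by auto
qed

lemma Cs_rev: "Cs (rev_order A) = rev_order (Cs A)"
proof -
  have i: "inD (rev_order A) a b \<longleftrightarrow> inD A a b" for a b
    unfolding inD_def by auto
  show ?thesis unfolding Cs_def i by (auto simp: rev_order_def)
qed

lemma pe_inj: "pe a b = pe a' b' \<longleftrightarrow> a = a' \<and> b = b'"
  by (simp add: prod_encode_eq)

lemma slin_Cs:
  assumes wf: "wf_struc A" and s: "slin A"
  shows "slin (Cs A)"
  unfolding slin_def
proof (intro conjI allI ballI impI)
  have irr: "(x, x) \<notin> snd A" for x using s unfolding slin_def by auto
  have tr: "(x, y) \<in> snd A \<Longrightarrow> (y, z) \<in> snd A \<Longrightarrow> (x, z) \<in> snd A" for x y z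
    using s unfolding slin_def trans_def by blast
  have tot: "x \<in> fst A \<Longrightarrow> y \<in> fst A \<Longrightarrow> x \<noteq> y \<Longrightarrow> (x, y) \<in> snd A \<or> (y, x) \<in> snd A" for x y
    using s unfolding slin_def by blast
  show "snd (Cs A) \<subseteq> fst (Cs A) \<times> fst (Cs A)" using wf_Cs unfolding wf_struc_def .
  show "(e, e) \<notin> snd (Cs A)" for e
    unfolding Cs_def using irr by (auto simp: pe_inj)
  show "trans (snd (Cs A))" unfolding trans_def
  proof (intro allI impI)
    fix x y z assume "(x, y) \<in> snd (Cs A)" "(y, z) \<in> snd (Cs A)"
    then obtain a b a' b' a2 b2 a'' b'' where
      xy: "x = pe a b" "y = pe a' b'" "inD A a b" "inD A a' b'" "(a, a') \<in> snd A \<or> (a = a' \<and> (b, b') \<in> snd A)"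
      and yz: "y = pe a2 b2" "z = pe a'' b''" "inD A a'' b''" "(a2, a'') \<in> snd A \<or> (a2 = a'' \<and> (b2, b'') \<in> snd A)"
      unfolding Cs_def by auto
    then have "a2 = a'" "b2 = b'" by (auto simp: pe_inj)
    then show "(x, z) \<in> snd (Cs A)" using xy yz tr by (auto simp: Cs_snd)
  qed
  fix e e' assume "e \<in> fst (Cs A)" "e' \<in> fst (Cs A)" "e \<noteq> e'"
  then obtain a b a' b' where e: "e = pe a b" "e' = pe a' b'" "inD A a b" "inD A a' b'"
    unfolding Cs_def by auto
  then have in4: "a \<in> fst A" "b \<in> fst A" "a' \<in> fst A" "b' \<in> fst A" using inD_in[OF wf] by auto
  show "(e, e') \<in> snd (Cs A) \<or> (e', e) \<in> snd (Cs A)"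
  proof (cases "a = a'")
    case True
    then have "b \<noteq> b'" using e \<open>e \<noteq> e'\<close> by auto
    then show ?thesis using tot[OF in4(2) in4(4)] True e by (auto simp: Cs_snd)
  next
    case False
    then show ?thesis using tot[OF in4(1) in4(3)] e by (auto simp: Cs_snd)
  qed
qed


locale cfg =
  fixes A :: "nat struc" and n :: nat and f :: "nat \<Rightarrow> nat list"
  assumes wfA: "wf_struc A" and n1: "1 \<le> n" and fb: "bij_betw f (fst A) {xs. length xs = n}"
    and fr: "\<And>a b. a \<in> fst A \<Longrightarrow> b \<in> fst A \<Longrightarrow> (a, b) \<in> snd A \<longleftrightarrow> (f a, f b) \<in> lex less_than"
begin

definition g :: "nat list \<Rightarrow> nat" where "g = inv_into (fst A) f"

lemma f_len: "a \<in> fst A \<Longrightarrow> length (f a) = n"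
  using fb bij_betwE by fastforce

lemma g_in: "length v = n \<Longrightarrow> g v \<in> fst A"
proof -
  assume "length v = n"
  then have "v \<in> f ` fst A" using fb unfolding bij_betw_def by simp
  then show ?thesis unfolding g_def by (rule inv_into_into)
qed

lemma f_g: "length v = n \<Longrightarrow> f (g v) = v"
  unfolding g_def using fb by (simp add: bij_betw_def f_inv_into_f)

lemma g_f: "a \<in> fst A \<Longrightarrow> g (f a) = a"
  unfolding g_def using fb by (simp add: bij_betw_def inv_into_f_f)

lemma Rlex: "length x = n \<Longrightarrow> length y = n \<Longrightarrow> (g x, g y) \<in> snd A \<longleftrightarrow> (x, y) \<in> lex less_than"
  using fr[OF g_in g_in] f_g by simp

lemma R_in: "(a, b) \<in> snd A \<Longrightarrow> a \<in> fst A \<and> b \<in> fst A"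
  using wfA unfolding wf_struc_def by auto

lemma slinA: "slin A"
proof (rule slin_iso[OF _ _ wfA])
  show "iso A (omega_pow n)" unfolding iso_def
    by (rule exI[of _ f]) (use fb fr f_len in \<open>auto simp: Lo_simps\<close>)
  show "slin (omega_pow n)" using swo_Lo unfolding swo_def by blast
qed

definition beta :: "nat \<Rightarrow> nat" where
  "beta a = Max (insert 0 ((\<lambda>z. hd (f z)) ` {z \<in> fst A. z \<le> a}))"

lemma beta_ge: "z \<in> fst A \<Longrightarrow> z \<le> a \<Longrightarrow> hd (f z) \<le> beta a"
  unfolding beta_def by (rule Max_ge) auto

lemma len_cons: "length v = n \<Longrightarrow> v = hd v # tl v"
  using n1 by (cases v) auto

lemma beta_bound: assumes "inD A a b" shows "hd (f b) \<le> beta a"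
proof -
  obtain z' where z': "z' \<le> a" "(b, z') \<in> snd A" using assms unfolding inD_def by blast
  then have bz: "b \<in> fst A" "z' \<in> fst A" using R_in by auto
  then have "(f b, f z') \<in> lex less_than" using fr z' by blast
  moreover have "f b = hd (f b) # tl (f b)" "f z' = hd (f z') # tl (f z')" using len_cons f_len bz by auto
  ultimately have "hd (f b) \<le> hd (f z')" using lex_hd_le by metis
  also have "\<dots> \<le> beta a" using beta_ge bz z' by blast
  finally show ?thesis .
qed

definition Gs :: "nat list \<Rightarrow> nat \<Rightarrow> nat" where
  "Gs p c = (\<Sum>k<c. beta (g (p @ [k])) + 1)"

lemma Gs_step: assumes "c < c'" shows "Gs p c + beta (g (p @ [c])) < Gs p c'"
proof -
  have "Gs p (Suc c) \<le> Gs p c'" unfolding Gs_def using assms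
    by (intro sum_mono2) auto
  then show ?thesis unfolding Gs_def by simp
qed

definition Fab :: "nat \<Rightarrow> nat \<Rightarrow> nat list" where
  "Fab a b = butlast (f a) @ [Gs (butlast (f a)) (last (f a)) + hd (f b)] @ tl (f b)"

definition F :: "nat \<Rightarrow> nat list" where
  "F e = Fab (fst (prod_decode e)) (snd (prod_decode e))"

lemma F_pe[simp]: "F (pe a b) = Fab a b"
  unfolding F_def by simp

lemma Fab_len: "a \<in> fst A \<Longrightarrow> b \<in> fst A \<Longrightarrow> length (Fab a b) = 2 * n - 1"
  unfolding Fab_def using f_len n1 by auto

lemma Fab_mono:
  assumes "(pe a b, pe a' b') \<in> snd (Cs A)"
  shows "(Fab a b, Fab a' b') \<in> lex less_than"
proof -
  have iD: "inD A a b" "inD A a' b'" and ord: "(a, a') \<in> snd A \<or> (a = a' \<and> (b, b') \<in> snd A)"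
    using assms by (auto simp: Cs_snd)
  have in4: "a \<in> fst A" "b \<in> fst A" "a' \<in> fst A" "b' \<in> fst A" using iD inD_in[OF wfA] by auto
  define x where "x = f a"
  define x' where "x' = f a'"
  have lx: "length x = n" "length x' = n" using f_len in4 x_def x'_def by auto
  have xne: "x \<noteq> []" "x' \<noteq> []" using lx n1 by auto
  have xs: "x = butlast x @ [last x]" "x' = butlast x' @ [last x']" using xne by auto
  have lbl: "length (butlast x) = length (butlast x')" using lx by simp
  have lb: "length (f b) = n" "length (f b') = n" using f_len in4 by auto
  have fbs: "f b = hd (f b) # tl (f b)" "f b' = hd (f b') # tl (f b')" using len_cons lb by auto
  have Fa: "Fab a b = butlast x @ (Gs (butlast x) (last x) + hd (f b)) # tl (f b)"
    and Fa': "Fab a' b' = butlast x' @ (Gs (butlast x') (last x') + hd (f b')) # tl (f b')"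
    unfolding Fab_def x_def x'_def by auto
  from ord show ?thesis
  proof
    assume "(a, a') \<in> snd A"
    then have "(x, x') \<in> lex less_than" using fr in4 x_def x'_def by blast
    then have "(butlast x @ [last x], butlast x' @ [last x']) \<in> lex less_than" using xs by simp
    then have "((butlast x, butlast x') \<in> lex less_than) \<or> (butlast x = butlast x' \<and> last x < last x')"
      using lex_app[OF lbl] by auto
    then show ?thesis
    proof
      assume "(butlast x, butlast x') \<in> lex less_than"
      then show ?thesis unfolding Fa Fa' by (rule lex_append_rightI) (simp add: lb)
    next
      assume h: "butlast x = butlast x' \<and> last x < last x'"
      let ?p = "butlast x"
      have "g (?p @ [last x]) = a" using xs(1) g_f in4 x_def by metis
      then have "Gs ?p (last x) + hd (f b) < Gs ?p (last x')"
        using Gs_step[of "last x" "last x'" ?p] h beta_bound[OF iD(1)] by simp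
      then have "Gs ?p (last x) + hd (f b) < Gs ?p (last x') + hd (f b')" by simp
      then have "((Gs ?p (last x) + hd (f b)) # tl (f b), (Gs ?p (last x') + hd (f b')) # tl (f b')) \<in> lex less_than"
        using lb by simp
      from lex_append_leftI[OF this, of ?p] show ?thesis unfolding Fa Fa' using h by simp
    qed
  next
    assume h: "a = a' \<and> (b, b') \<in> snd A"
    then have "(f b, f b') \<in> lex less_than" using fr in4 by blast
    then have "(hd (f b) < hd (f b') \<and> length (tl (f b)) = length (tl (f b'))) \<or>
       (hd (f b) = hd (f b') \<and> (tl (f b), tl (f b')) \<in> lex less_than)"
      using fbs Cons_in_lex[of "hd (f b)" "tl (f b)" "hd (f b')" "tl (f b')" less_than] by auto
    moreover have "x = x'" using h x_def x'_def by simp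
    ultimately have "((Gs (butlast x) (last x) + hd (f b)) # tl (f b), (Gs (butlast x') (last x') + hd (f b')) # tl (f b')) \<in> lex less_than"
      by auto
    from lex_append_leftI[OF this, of "butlast x"] show ?thesis unfolding Fa Fa' using \<open>x = x'\<close> by simp
  qed
qed

definition z0 :: nat where "z0 = g (replicate n 0)"

definition K :: nat where
  "K = Max (insert 0 ((\<lambda>w. hd (f w)) ` {w \<in> fst A. w \<le> z0})) + 2"

lemma K_prop: "w \<in> fst A \<Longrightarrow> w \<le> z0 \<Longrightarrow> hd (f w) < K"
proof -
  assume "w \<in> fst A" "w \<le> z0"
  then have "hd (f w) \<le> Max (insert 0 ((\<lambda>w. hd (f w)) ` {w \<in> fst A. w \<le> z0}))"
    by (intro Max_ge) auto
  then show ?thesis unfolding K_def by simp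
qed

lemma K2: "2 \<le> K" unfolding K_def by simp

definition xv :: "nat list \<Rightarrow> nat list" where
  "xv v = (K + hd (take n v)) # tl (take n v)"
definition yv :: "nat list \<Rightarrow> nat list" where
  "yv v = 1 # drop n v"
definition H :: "nat list \<Rightarrow> nat" where
  "H v = pe (g (xv v)) (g (yv v))"

lemma xv_len: assumes "length v = 2 * n - 1" shows "length (xv v) = n"
proof -
  have "length (take n v) = n" using assms n1 by simp
  then show ?thesis unfolding xv_def using n1 by (cases "take n v") auto
qed

lemma yv_len: "length v = 2 * n - 1 \<Longrightarrow> length (yv v) = n"
  unfolding yv_def using n1 by auto

lemma H_in: assumes "length v = 2 * n - 1" shows "inD A (g (xv v)) (g (yv v))"
proof -
  have lx: "length (xv v) = n" and ly: "length (yv v) = n" using xv_len yv_len assms by auto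
  have z0in: "z0 \<in> fst A" unfolding z0_def by (rule g_in) simp
  have gx: "g (xv v) \<in> fst A" using g_in lx by blast
  have "z0 \<le> g (xv v)"
  proof (rule ccontr)
    assume "\<not> z0 \<le> g (xv v)"
    then have "hd (f (g (xv v))) < K" using K_prop gx by simp
    then show False using f_g[OF lx] unfolding xv_def by simp
  qed
  moreover have "(z0, g (yv v)) \<in> snd A"
  proof -
    have "replicate n (0::nat) = 0 # replicate (n - 1) 0" using n1 by (cases n) auto
    then have "(replicate n 0, yv v) \<in> lex less_than" using ly unfolding yv_def by simp
    then show ?thesis unfolding z0_def using Rlex ly by simp
  qed
  moreover have "(g (yv v), g (xv v)) \<in> snd A"
  proof -
    have "(yv v, xv v) \<in> lex less_than" using K2 lx ly unfolding xv_def yv_def by auto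
    then show ?thesis using Rlex lx ly by simp
  qed
  ultimately show ?thesis unfolding inD_def using gx by blast
qed

lemma H_mono:
  assumes lv: "length v = 2 * n - 1" and lv': "length v' = 2 * n - 1" and vv: "(v, v') \<in> lex less_than"
  shows "(H v, H v') \<in> snd (Cs A)"
proof -
  have lt: "length (take n v) = length (take n v')" using lv lv' by simp
  have tne: "take n v \<noteq> []" using lv n1 by (cases v) auto
  have tne': "take n v' \<noteq> []" using lv' n1 by (cases v') auto
  have c: "(take n v, take n v') \<in> lex less_than \<or> (take n v = take n v' \<and> (drop n v, drop n v') \<in> lex less_than)"
    using lex_app[OF lt, of "drop n v" "drop n v'" less_than] vv lv lv' by auto
  have lx: "length (xv v) = n" "length (xv v') = n" using xv_len lv lv' by auto
  have ly: "length (yv v) = n" "length (yv v') = n" using yv_len lv lv' by auto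
  have "(g (xv v), g (xv v')) \<in> snd A \<or> (g (xv v) = g (xv v') \<and> (g (yv v), g (yv v')) \<in> snd A)"
    using c
  proof
    assume h: "(take n v, take n v') \<in> lex less_than"
    obtain c cs where t1: "take n v = c # cs" using tne by (cases "take n v") auto
    obtain c' cs' where t2: "take n v' = c' # cs'" using tne' by (cases "take n v'") auto
    have "(c < c' \<and> length cs = length cs') \<or> (c = c' \<and> (cs, cs') \<in> lex less_than)"
      using h t1 t2 by auto
    then have "(xv v, xv v') \<in> lex less_than" unfolding xv_def using t1 t2 by auto
    then show ?thesis using Rlex lx by blast
  next
    assume h: "take n v = take n v' \<and> (drop n v, drop n v') \<in> lex less_than"
    then have "xv v = xv v'" unfolding xv_def by simp
    moreover have "(yv v, yv v') \<in> lex less_than" using h unfolding yv_def by simp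
    ultimately show ?thesis using Rlex ly by simp
  qed
  then show ?thesis unfolding H_def using H_in lv lv' by (auto simp: Cs_snd)
qed

lemma swo_Cs: "swo (Cs A)"
  unfolding swo_def
proof
  show "slin (Cs A)" using slin_Cs[OF wfA slinA] .
  have "snd (Cs A) \<subseteq> inv_image (lex less_than) F"
  proof
    fix p assume "p \<in> snd (Cs A)"
    then obtain a b a' b' where "p = (pe a b, pe a' b')" unfolding Cs_def by auto
    then show "p \<in> inv_image (lex less_than) F" using Fab_mono \<open>p \<in> snd (Cs A)\<close> by auto
  qed
  then show "wf (snd (Cs A))" by (rule wf_subset[OF wf_inv_image[OF wf_lex[OF wf_less_than]]])
qed

theorem Cs_iso: "iso (Cs A) (omega_pow (2 * n - 1))"
proof (rule sandwich[OF swo_Cs swo_Lo])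
  show "F e \<in> fst (omega_pow (2 * n - 1))" if "e \<in> fst (Cs A)" for e
    using that inD_in[OF wfA] Fab_len by (auto simp: Cs_fst Lo_simps)
  show "(F e, F e') \<in> snd (omega_pow (2 * n - 1))" if hee: "(e, e') \<in> snd (Cs A)" for e e'
  proof -
    obtain a b a' b' where ee: "e = pe a b" "e' = pe a' b'" using hee unfolding Cs_def by auto
    have "inD A a b" "inD A a' b'" using hee ee by (auto simp: Cs_snd)
    then show ?thesis using hee ee Fab_mono Fab_len inD_in[OF wfA] by (auto simp: Lo_simps)
  qed
  show "H v \<in> fst (Cs A)" if "v \<in> fst (omega_pow (2 * n - 1))" for v
    using that H_in unfolding H_def by (auto simp: Cs_fst Lo_simps)
  show "(H v, H v') \<in> snd (Cs A)" if "(v, v') \<in> snd (omega_pow (2 * n - 1))" for v v'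
    using that H_mono by (auto simp: Lo_simps)
qed

end


lemma diag_inj:
  assumes "wf_struc B" "wf_struc B'" "diag B = diag B'"
  shows "B = B'"
proof -
  have f: "fst B = fst B'"
  proof
    show "fst B \<subseteq> fst B'" using assms(3) diag_simps(3)[of _ _ B] diag_simps(3)[of _ _ B'] by blast
    show "fst B' \<subseteq> fst B" using assms(3) diag_simps(3)[of _ _ B] diag_simps(3)[of _ _ B'] by blast
  qed
  have s: "snd B = snd B'"
  proof
    show "snd B \<subseteq> snd B'"
    proof
      fix p assume p: "p \<in> snd B"
      obtain u v where uv: "p = (u, v)" by fastforce
      then have "Pos (Lt u v) \<in> diag B" using p assms(1) unfolding wf_struc_def by (auto simp: diag_simps)
      then have "Pos (Lt u v) \<in> diag B'" using assms(3) by simp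
      then show "p \<in> snd B'" using uv by (simp add: diag_simps)
    qed
    show "snd B' \<subseteq> snd B"
    proof
      fix p assume p: "p \<in> snd B'"
      obtain u v where uv: "p = (u, v)" by fastforce
      then have "Pos (Lt u v) \<in> diag B'" using p assms(2) unfolding wf_struc_def by (auto simp: diag_simps)
      then have "Pos (Lt u v) \<in> diag B" using assms(3) by simp
      then show "p \<in> snd B" using uv by (simp add: diag_simps)
    qed
  qed
  show ?thesis using f s by (simp add: prod_eq_iff)
qed

lemma Cs_iso_Lo:
  assumes "wf_struc A" "iso A (omega_pow n)" "1 \<le> n"
  shows "iso (Cs A) (omega_pow (2 * n - 1))"
proof -
  obtain f where f: "bij_betw f (fst A) (fst (omega_pow n))"
    "\<forall>a\<in>fst A. \<forall>b\<in>fst A. (a, b) \<in> snd A \<longleftrightarrow> (f a, f b) \<in> snd (omega_pow n)"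
    using assms(2) unfolding iso_def by blast
  have fb: "bij_betw f (fst A) {xs. length xs = n}" using f(1) by (simp add: Lo_simps)
  have "length (f a) = n" if "a \<in> fst A" for a using fb that bij_betwE by fastforce
  then have fr: "\<And>a b. a \<in> fst A \<Longrightarrow> b \<in> fst A \<Longrightarrow> (a, b) \<in> snd A \<longleftrightarrow> (f a, f b) \<in> lex less_than"
    using f(2) by (auto simp: Lo_simps)
  interpret cfg A n f using assms(1,3) fb fr by unfold_locales auto
  show ?thesis by (rule Cs_iso)
qed

lemma Cs_iso_rev:
  assumes "wf_struc A" "iso A (rev_order (omega_pow n))" "1 \<le> n"
  shows "iso (Cs A) (rev_order (omega_pow (2 * n - 1)))"
proof -
  have "iso (rev_order A) (omega_pow n)" using iso_rev[OF assms(2)] by simp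
  then have "iso (Cs (rev_order A)) (omega_pow (2 * n - 1))"
    using Cs_iso_Lo wf_struc_rev[OF assms(1)] assms(3) by blast
  from iso_rev[OF this] have "iso (rev_order (Cs (rev_order A))) (rev_order (omega_pow (2 * n - 1)))" .
  moreover have "rev_order (Cs (rev_order A)) = Cs A"
    using Cs_rev[of "rev_order A"] by simp
  ultimately show ?thesis by simp
qed

lemma slin_of_class:
  assumes "wf_struc A" "iso A (omega_pow n) \<or> iso A (rev_order (omega_pow n))"
  shows "slin A"
proof -
  have s1: "slin (omega_pow n)" using swo_Lo unfolding swo_def by blast
  have s2: "slin (rev_order (omega_pow n))" using slin_rev[OF s1] .
  show ?thesis using assms slin_iso s1 s2 by blast
qed

lemma not_both:
  assumes "1 \<le> m" "iso S (omega_pow m)" "iso S' (rev_order (omega_pow m))"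
  shows "\<not> iso S S'"
proof
  assume "iso S S'"
  then have "iso (omega_pow m) (rev_order (omega_pow m))"
    using iso_trans[OF iso_sym[OF assms(2)] iso_trans[OF _ assms(3)]] by blast
  then show False using not_iso_Lo_rev[OF assms(1)] by blast
qed

theorem corollary6p3:
  fixes n :: nat
  assumes "1 \<le> n"
  shows "comp_embeds
           (two_class (omega_pow n) (rev_order (omega_pow n)))
           (two_class (omega_pow (2 * n - 1)) (rev_order (omega_pow (2 * n - 1))))"
proof -
  let ?m = "2 * n - 1"
  have m1: "1 \<le> ?m" using assms by simp
  let ?K0 = "two_class (omega_pow n) (rev_order (omega_pow n))"
  let ?K1 = "two_class (omega_pow ?m) (rev_order (omega_pow ?m))"
  have app: "apply_op Gam (diag A) = diag (Cs A)" if "A \<in> ?K0" for A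
    using that Gam_correct slin_of_class unfolding two_class_def by blast
  have CK1: "Cs A \<in> ?K1" if "A \<in> ?K0" for A
    using that wf_Cs Cs_iso_Lo Cs_iso_rev assms unfolding two_class_def by blast
  have Beq: "B = Cs A" if "A \<in> ?K0" "B \<in> ?K1" "apply_op Gam (diag A) = diag B" for A B
  proof -
    have wB: "wf_struc B" using that(2) unfolding two_class_def by blast
    have "diag (Cs A) = diag B" using app[OF that(1)] that(3) by simp
    from diag_inj[OF wf_Cs wB this] show ?thesis by simp
  qed
  have isoiff: "iso A A' \<longleftrightarrow> iso (Cs A) (Cs A')" if hAA: "A \<in> ?K0" "A' \<in> ?K0" for A A'
  proof -
    have wA: "wf_struc A" "wf_struc A'" using hAA unfolding two_class_def by auto
    consider "iso A (omega_pow n)" | "iso A (rev_order (omega_pow n))" using hAA unfolding two_class_def by blast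
    then show ?thesis
    proof cases
      case 1
      note c1 = Cs_iso_Lo[OF wA(1) 1 assms]
      consider "iso A' (omega_pow n)" | "iso A' (rev_order (omega_pow n))" using hAA unfolding two_class_def by blast
      then show ?thesis
      proof cases
        case 1
        note c2 = Cs_iso_Lo[OF wA(2) 1 assms]
        show ?thesis using iso_trans[OF \<open>iso A (omega_pow n)\<close> iso_sym[OF 1]]
          iso_trans[OF c1 iso_sym[OF c2]] by blast
      next
        case 2
        note c2 = Cs_iso_rev[OF wA(2) 2 assms]
        show ?thesis using not_both[OF assms \<open>iso A (omega_pow n)\<close> 2] not_both[OF m1 c1 c2] by blast
      qed
    next
      case 2
      note c1 = Cs_iso_rev[OF wA(1) 2 assms]
      consider "iso A' (omega_pow n)" | "iso A' (rev_order (omega_pow n))" using hAA unfolding two_class_def by blast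
      then show ?thesis
      proof cases
        case 1
        note c2 = Cs_iso_Lo[OF wA(2) 1 assms]
        have "\<not> iso A' A" using not_both[OF assms 1 \<open>iso A (rev_order (omega_pow n))\<close>] .
        moreover have "\<not> iso (Cs A') (Cs A)" using not_both[OF m1 c2 c1] .
        ultimately show ?thesis using iso_sym by blast
      next
        case 2
        note c2 = Cs_iso_rev[OF wA(2) 2 assms]
        show ?thesis using iso_trans[OF \<open>iso A (rev_order (omega_pow n))\<close> iso_sym[OF 2]]
          iso_trans[OF c1 iso_sym[OF c2]] by blast
      qed
    qed
  qed
  show ?thesis unfolding comp_embeds_def
  proof (intro exI conjI ballI impI)
    show "enum_op Gam" by (rule enum_Gam)
    show "\<exists>B\<in>?K1. apply_op Gam (diag A) = diag B" if "A \<in> ?K0" for A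
      using app[OF that] CK1[OF that] by blast
    show "iso A A' = iso B B'" if "A \<in> ?K0" "A' \<in> ?K0" "B \<in> ?K1" "B' \<in> ?K1"
      "apply_op Gam (diag A) = diag B" "apply_op Gam (diag A') = diag B'" for A A' B B'
      using isoiff[OF that(1,2)] Beq[OF that(1,3,5)] Beq[OF that(2,4,6)] by simp
  qed
qed


end
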